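(* For every $n \in \mathbb{N}$, $$ d^B_n(x) \;=\; \sum \binom{n}{r_0, r_1, \dots, r_k}\, x^{\lfloor (k+1)/2 \rfloor}\, d_{r_0}(x)\, A_{r_1}(x) \cdots A_{r_k}(x), $$ where the sum ranges over all $k \in \mathbb{N}$ and all sequences $(r_0, r_1, \dots, r_k)$ of nonnegative integers with $r_0 + \cdots + r_k = n$, and where the conventions $A_0(x) = 0$ and $d_0(x) = 1$ are used.
   Context: Type A: for a permutation $u$ of $[m]=\{1,\dots,m\}$, $\mathrm{exc}(u) = \#\{i : u(i) > i\}$ and $\mathrm{des}(u) = \#\{i \in [m-1] : u(i) > u(i+1)\}$. For $m \ge 1$, $A_m(x) = \sum_{u \in \mathfrak{S}_m} x^{\mathrm{des}(u)}$ is the Eulerian polynomial and $d_m(x) = \sum_{u} x^{\mathrm{exc}(u)}$ is the derangement polynomial, where the sum runs over permutations $u \in \mathfrak{S}_m$ without fixed points. Signed permutations: a signed permutation of $[n]$ is a pair consisting of a set $S = \{a_1, \dots, a_n\}$ with $a_i \in \{i, -i\}$ for each $i$, and a bijection $w : S \to S$. The set of all of them is $B_n$. - An element $a \in S$ is a $B$-excedance of $w$ if either $w(a) > a$, or $a < 0$ and $w(a) = a$ (all comparisons are in $\mathbb{Z}$). - $\mathrm{exc}_B(w)$ denotes the number of $B$-excedances of $w$. - $w$ is a derangement if there is no $a \in S$ with $a > 0$ and $w(a) = a$; the set of derangements is $\mathcal{D}^B_n$. - $d^B_n(x) = \sum_{w \in \mathcal{D}^B_n} x^{\mathrm{exc}_B(w)}$,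 with $d^B_0(x) = 1$. *)

theory Defs
  imports "HOL-Computational_Algebra.Polynomial" "HOL-Combinatorics.Permutations"
          "HOL-Library.Groups_Big_Fun"
begin

definition exc :: "nat \<Rightarrow> (nat \<Rightarrow> nat) \<Rightarrow> nat" where
  "exc m u = card {i \<in> {1..m}. u i > i}"

definition des :: "nat \<Rightarrow> (nat \<Rightarrow> nat) \<Rightarrow> nat" where
  "des m u = card {i \<in> {1..m-1}. u i > u (i+1)}"

definition eulerian_poly :: "nat \<Rightarrow> int poly" where
  "eulerian_poly m = (if m = 0 then 0 else
     (\<Sum>u \<in> {u. u permutes {1..m}}. monom 1 (des m u)))"

text \<open>Derangement polynomial (d_0 = 1 results automatically).\<close>
definition derangement_poly :: "nat \<Rightarrow> int poly" where
  "derangement_poly m =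
     (\<Sum>u \<in> {u. u permutes {1..m} \<and> (\<forall>i\<in>{1..m}. u i \<noteq> i)}. monom 1 (exc m u))"

text \<open>Signed permutations of [n]: a set S = {a_1,...,a_n}, a_i \<in> {i,-i},
  and a bijection w : S \<rightarrow> S, represented as a permutation of S
  (identity outside S).\<close>
definition signed_set :: "nat \<Rightarrow> int set \<Rightarrow> bool" where
  "signed_set n S \<longleftrightarrow> S \<subseteq> {a. a \<noteq> 0 \<and> \<bar>a\<bar> \<le> int n} \<and>
     (\<forall>i\<in>{1..n}. (int i \<in> S \<longleftrightarrow> - int i \<notin> S))"

definition signed_perms :: "nat \<Rightarrow> (int set \<times> (int \<Rightarrow> int)) set" where
  "signed_perms n = {(S, w). signed_set n S \<and> w permutes S}"

definition excB :: "int set \<times> (int \<Rightarrow> int) \<Rightarrow> nat" where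
  "excB p = (case p of (S, w) \<Rightarrow> card {a \<in> S. w a > a \<or> (a < 0 \<and> w a = a)})"

definition derangementsB :: "nat \<Rightarrow> (int set \<times> (int \<Rightarrow> int)) set" where
  "derangementsB n = {(S, w) \<in> signed_perms n. \<not> (\<exists>a\<in>S. a > 0 \<and> w a = a)}"

definition derangement_polyB :: "nat \<Rightarrow> int poly" where
  "derangement_polyB n = (\<Sum>p \<in> derangementsB n. monom 1 (excB p))"

definition multinomial :: "nat \<Rightarrow> nat list \<Rightarrow> nat" where
  "multinomial n rs = fact n div prod_list (map fact rs)"

end

theory Submission imports Defs "HOL-Computational_Algebra.Formal_Power_Series" "HOL-Combinatorics.Multiset_Permutations" begin


lemma exists_mono_bij:
  fixes T :: "'a::linorder set"
  assumes "finite T"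
  shows "\<exists>h. bij_betw h {1..card T} T \<and> (\<forall>i\<in>{1..card T}. \<forall>j\<in>{1..card T}. i < j \<longrightarrow> h i < h j)"
proof -
  define xs where "xs = sorted_list_of_set T"
  have s: "sorted_wrt (<) xs" "set xs = T" "length xs = card T" "distinct xs"
    using assms by (auto simp: xs_def)
  define h where "h i = xs ! (i - 1)" for i
  have mono: "\<forall>i\<in>{1..card T}. \<forall>j\<in>{1..card T}. i < j \<longrightarrow> h i < h j"
    using s(1,3) by (auto simp: h_def sorted_wrt_iff_nth_less)
  have "inj_on h {1..card T}"
    by (rule inj_onI) (metis linorder_neqE_nat mono order_less_irrefl)
  moreover have "h ` {1..card T} = T"
  proof
    show "h ` {1..card T} \<subseteq> T" using s by (auto simp: h_def)
    show "T \<subseteq> h ` {1..card T}"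
    proof
      fix x assume "x \<in> T"
      then obtain k where "k < length xs" "xs ! k = x" using s(2) by (metis in_set_conv_nth)
      then show "x \<in> h ` {1..card T}" using s(3) by (auto simp: h_def image_iff intro!: bexI[of _ "k+1"])
    qed
  qed
  ultimately show ?thesis using mono by (auto simp: bij_betw_def)
qed

definition excG :: "'a::linorder set \<Rightarrow> ('a \<Rightarrow> 'a) \<Rightarrow> nat" where
  "excG T u = card {i\<in>T. u i > i}"

definition derS :: "'a set \<Rightarrow> ('a \<Rightarrow> 'a) set" where
  "derS T = {u. u permutes T \<and> (\<forall>i\<in>T. u i \<noteq> i)}"

definition dgen :: "'a::linorder set \<Rightarrow> int poly" where
  "dgen T = (\<Sum>u\<in>derS T. monom 1 (excG T u))"

lemma derangement_poly_dgen: "derangement_poly m = dgen {1..m}"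
  unfolding derangement_poly_def dgen_def derS_def excG_def exc_def by simp

lemma excG_conj:
  fixes h :: "'a::linorder \<Rightarrow> 'b::linorder"
  assumes bij: "bij_betw h A B"
    and mono: "\<forall>i\<in>A. \<forall>j\<in>A. i < j \<longrightarrow> h i < h j"
    and u: "u permutes A"
  shows "excG B (\<lambda>x. if x \<in> B then h (u (inv_into A h x)) else x) = excG A u"
proof -
  have monoiff: "h i < h j \<longleftrightarrow> i < j" if "i \<in> A" "j \<in> A" for i j
    using mono that by (metis linorder_neqE order_less_asym order_less_irrefl)
  have "{x\<in>B. (if x \<in> B then h (u (inv_into A h x)) else x) > x} = h ` {i\<in>A. u i > i}"
  proof (rule set_eqI, rule iffI)
    fix x assume x: "x \<in> {x\<in>B. (if x \<in> B then h (u (inv_into A h x)) else x) > x}"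
    then have xB: "x \<in> B" by auto
    let ?i = "inv_into A h x"
    have iA: "?i \<in> A" using bij xB by (metis bij_betw_def inv_into_into)
    have hi: "h ?i = x" using bij xB by (metis bij_betw_inv_into_right)
    have "h (u ?i) > h ?i" using x hi by auto
    then have "u ?i > ?i" using monoiff iA permutes_in_image[OF u] by blast
    then show "x \<in> h ` {i\<in>A. u i > i}" using iA hi by force
  next
    fix x assume "x \<in> h ` {i\<in>A. u i > i}"
    then obtain i where i: "i \<in> A" "u i > i" "x = h i" by auto
    have xB: "x \<in> B" using bij i by (auto simp: bij_betw_def)
    have "inv_into A h x = i" using bij i by (metis bij_betw_inv_into_left)
    moreover have "h (u i) > h i" using monoiff i permutes_in_image[OF u] by blast
    ultimately show "x \<in> {x\<in>B. (if x \<in> B then h (u (inv_into A h x)) else x) > x}"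
      using xB i by auto
  qed
  moreover have "inj_on h {i\<in>A. u i > i}"
    using bij by (auto simp: bij_betw_def intro: inj_on_subset)
  ultimately show ?thesis unfolding excG_def by (simp add: card_image)
qed

lemma dgen_std:
  fixes T :: "'a::linorder set"
  assumes "finite T"
  shows "dgen T = derangement_poly (card T)"
proof -
  obtain h where h: "bij_betw h {1..card T} T"
    "\<forall>i\<in>{1..card T}. \<forall>j\<in>{1..card T}. i < j \<longrightarrow> h i < h j"
    using exists_mono_bij[OF assms] by blast
  let ?f = "\<lambda>\<pi> x. if x \<in> T then h (\<pi> (inv_into {1..card T} h x)) else x"
  have b: "bij_betw ?f (derS {1..card T}) (derS T)"
    using bij_betw_derangements[OF h(1)] unfolding derS_def .
  have "dgen T = (\<Sum>u\<in>derS {1..card T}. monom 1 (excG T (?f u)))"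
    unfolding dgen_def by (rule sum.reindex_bij_betw[OF b, symmetric])
  also have "\<dots> = (\<Sum>u\<in>derS {1..card T}. monom 1 (excG {1..card T} u))"
    by (rule sum.cong[OF refl]) (use excG_conj[OF h] in \<open>auto simp: derS_def\<close>)
  finally show ?thesis by (simp add: derangement_poly_dgen dgen_def)
qed


lemma sum_pow_card:
  fixes g :: "nat \<Rightarrow> 'b::comm_semiring_1"
  assumes "finite A"
  shows "(\<Sum>F\<in>Pow A. g (card F)) = (\<Sum>k\<le>card A. of_nat (card A choose k) * g k)"
proof -
  have "(\<Sum>F\<in>Pow A. g (card F)) = (\<Sum>k\<le>card A. \<Sum>F\<in>{F. F \<in> Pow A \<and> card F = k}. g (card F))"
    by (rule sum.group[symmetric]) (use assms in \<open>auto intro: card_mono\<close>)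
  also have "\<dots> = (\<Sum>k\<le>card A. of_nat (card A choose k) * g k)"
  proof (rule sum.cong[OF refl])
    fix k assume "k \<in> {..card A}"
    have "(\<Sum>F\<in>{F. F \<in> Pow A \<and> card F = k}. g (card F)) = (\<Sum>F\<in>{F. F \<subseteq> A \<and> card F = k}. g k)"
      by (rule sum.cong) auto
    also have "\<dots> = of_nat (card A choose k) * g k"
      using n_subsets[OF assms, of k] by simp
    finally show "(\<Sum>F\<in>{F. F \<in> Pow A \<and> card F = k}. g (card F)) = of_nat (card A choose k) * g k" .
  qed
  finally show ?thesis .
qed

definition fixS :: "'a set \<Rightarrow> ('a \<Rightarrow> 'a) \<Rightarrow> 'a set" where
  "fixS T w = {a\<in>T. w a = a}"

lemma permutes_fix_iff:
  assumes "F \<subseteq> T"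
  shows "(w permutes T \<and> fixS T w = F) \<longleftrightarrow> w \<in> derS (T - F)"
proof
  assume a: "w permutes T \<and> fixS T w = F"
  have "w permutes (T - F)"
  proof (rule permutes_superset[of w T])
    show "w permutes T" using a by auto
    show "\<And>x. x \<in> T - (T - F) \<Longrightarrow> w x = x" using a assms by (auto simp: fixS_def)
  qed
  then show "w \<in> derS (T - F)" using a by (auto simp: derS_def fixS_def)
next
  assume a: "w \<in> derS (T - F)"
  then have p: "w permutes (T - F)" by (auto simp: derS_def)
  have "w permutes T" by (rule permutes_subset[OF p]) auto
  moreover have "fixS T w = F"
  proof -
    have "w a = a" if "a \<in> F" for a using permutes_not_in[OF p] that by auto
    then show ?thesis using a assms by (auto simp: fixS_def derS_def)
  qed
  ultimately show "w permutes T \<and> fixS T w = F" by auto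
qed

lemma excG_fix:
  assumes "F \<subseteq> T" "w \<in> derS (T - F)"
  shows "excG T w = excG (T - F) w"
proof -
  have "w a = a" if "a \<in> F" for a using assms that by (auto simp: derS_def permutes_not_in)
  then have "{i\<in>T. w i > i} = {i\<in>T - F. w i > i}" by force
  then show ?thesis by (simp add: excG_def)
qed

lemma fixdec:
  fixes T :: "'a::linorder set" and f :: "nat \<Rightarrow> int poly"
  assumes fin: "finite T" and K: "K \<subseteq> T"
  shows "(\<Sum>w\<in>{w. w permutes T \<and> fixS T w \<subseteq> K}. f (card (fixS T w)) * monom 1 (excG T w))
       = (\<Sum>F\<in>Pow K. f (card F) * derangement_poly (card T - card F))"
proof -
  let ?P = "{w. w permutes T \<and> fixS T w \<subseteq> K}"
  have finP: "finite ?P" using finite_permutations[OF fin] by (rule finite_subset[rotated]) auto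
  have "(\<Sum>w\<in>?P. f (card (fixS T w)) * monom 1 (excG T w))
     = (\<Sum>F\<in>Pow K. \<Sum>w\<in>{w. w \<in> ?P \<and> fixS T w = F}. f (card (fixS T w)) * monom 1 (excG T w))"
    by (rule sum.group[symmetric]) (use finP fin K in \<open>auto intro: finite_subset\<close>)
  also have "\<dots> = (\<Sum>F\<in>Pow K. f (card F) * derangement_poly (card T - card F))"
  proof (rule sum.cong[OF refl])
    fix F assume F: "F \<in> Pow K"
    then have FT: "F \<subseteq> T" using K by auto
    have "{w. w \<in> ?P \<and> fixS T w = F} = derS (T - F)"
      using permutes_fix_iff[OF FT] F by auto
    then have "(\<Sum>w\<in>{w. w \<in> ?P \<and> fixS T w = F}. f (card (fixS T w)) * monom 1 (excG T w))
        = (\<Sum>w\<in>derS (T - F). f (card F) * monom 1 (excG (T - F) w))"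
    proof (intro sum.cong refl)
      fix w assume w: "w \<in> derS (T - F)"
      then have "fixS T w = F" using permutes_fix_iff[OF FT] by blast
      then show "f (card (fixS T w)) * monom 1 (excG T w) = f (card F) * monom 1 (excG (T - F) w)"
        using excG_fix[OF FT w] by simp
    qed
    also have "\<dots> = f (card F) * dgen (T - F)"
      by (simp add: dgen_def sum_distrib_left)
    also have "\<dots> = f (card F) * derangement_poly (card T - card F)"
      using dgen_std[of "T - F"] fin FT by (simp add: card_Diff_subset finite_subset)
    finally show "(\<Sum>w\<in>{w. w \<in> ?P \<and> fixS T w = F}. f (card (fixS T w)) * monom 1 (excG T w))
        = f (card F) * derangement_poly (card T - card F)" .
  qed
  finally show ?thesis .
qed

definition Pe :: "nat \<Rightarrow> int poly" where
  "Pe n = (\<Sum>u\<in>{u. u permutes {1..n}}. monom 1 (excG {1..n} u))"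

lemma Pe_der: "Pe n = (\<Sum>k\<le>n. of_nat (n choose k) * derangement_poly (n - k))"
proof -
  have "Pe n = (\<Sum>w\<in>{w. w permutes {1..n} \<and> fixS {1..n} w \<subseteq> {1..n}}.
                 (\<lambda>_. 1) (card (fixS {1..n} w)) * monom 1 (excG {1..n} w))"
    unfolding Pe_def by (rule sum.cong) (auto simp: fixS_def)
  also have "\<dots> = (\<Sum>F\<in>Pow {1..n}. 1 * derangement_poly (card {1..n} - card F))"
    by (rule fixdec) auto
  also have "\<dots> = (\<Sum>k\<le>n. of_nat (n choose k) * derangement_poly (n - k))"
    using sum_pow_card[of "{1..n}" "\<lambda>k. derangement_poly (n - k)"] by simp
  finally show ?thesis .
qed


definition sgn_set :: "nat \<Rightarrow> nat set \<Rightarrow> int set" where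
  "sgn_set n P = int ` P \<union> (\<lambda>i. - int i) ` ({1..n} - P)"

lemma signed_set_iff: "signed_set n S \<longleftrightarrow> S \<in> sgn_set n ` Pow {1..n}"
proof
  assume S: "signed_set n S"
  let ?P = "{i\<in>{1..n}. int i \<in> S}"
  have "S = sgn_set n ?P"
  proof (rule set_eqI, rule iffI)
    fix a assume a: "a \<in> S"
    then have a0: "a \<noteq> 0" "\<bar>a\<bar> \<le> int n" using S by (auto simp: signed_set_def)
    show "a \<in> sgn_set n ?P"
    proof (cases "a > 0")
      case True
      then have "a = int (nat a)" "nat a \<in> {1..n}" using a0 by auto
      then show ?thesis using a unfolding sgn_set_def by (metis (mono_tags, lifting) UnI1 image_eqI mem_Collect_eq)
    next
      case False
      then have ai: "a = - int (nat (-a))" "nat (-a) \<in> {1..n}" using a0 by auto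
      have "(int (nat (-a)) \<in> S) = (- int (nat (-a)) \<notin> S)" using S ai(2) unfolding signed_set_def by blast
      moreover have e: "- int (nat (-a)) = a" using False by simp
      ultimately have "int (nat (-a)) \<notin> S" using a False by simp
      then show ?thesis using ai unfolding sgn_set_def by (metis (no_types, lifting) DiffI UnI2 image_eqI mem_Collect_eq)
    qed
  next
    fix a assume "a \<in> sgn_set n ?P"
    then show "a \<in> S" using S unfolding sgn_set_def signed_set_def by auto
  qed
  then show "S \<in> sgn_set n ` Pow {1..n}" by blast
next
  assume "S \<in> sgn_set n ` Pow {1..n}"
  then obtain P where P: "P \<subseteq> {1..n}" "S = sgn_set n P" by auto
  show "signed_set n S"
    unfolding signed_set_def P(2) sgn_set_def using P(1) by auto
qed

lemma sgn_set_inj: "inj_on (sgn_set n) (Pow {1..n})"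
proof (rule inj_onI)
  fix P Q assume PQ: "P \<in> Pow {1..n}" "Q \<in> Pow {1..n}" "sgn_set n P = sgn_set n Q"
  have "P = {i. int i \<in> sgn_set n P}" using PQ(1) by (auto simp: sgn_set_def)
  moreover have "Q = {i. int i \<in> sgn_set n Q}" using PQ(2) by (auto simp: sgn_set_def)
  ultimately show "P = Q" using PQ(3) by simp
qed

lemma neg_sgn_set: "P \<subseteq> {1..n} \<Longrightarrow> {a \<in> sgn_set n P. a < 0} = (\<lambda>i. - int i) ` ({1..n} - P)"
  by (auto simp: sgn_set_def)

lemma card_neg_sgn_set: "P \<subseteq> {1..n} \<Longrightarrow> card {a \<in> sgn_set n P. a < 0} = n - card P"
proof -
  assume P: "P \<subseteq> {1..n}"
  have "inj_on (\<lambda>i::nat. - int i) ({1..n} - P)" by (auto simp: inj_on_def)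
  then show ?thesis using P by (simp add: neg_sgn_set card_image card_Diff_subset finite_subset)
qed

lemma card_sgn_set: "P \<subseteq> {1..n} \<Longrightarrow> card (sgn_set n P) = n"
proof -
  assume P: "P \<subseteq> {1..n}"
  have fP: "finite P" using P finite_subset by blast
  have d: "int ` P \<inter> (\<lambda>i. - int i) ` ({1..n} - P) = {}" by auto
  have "card (sgn_set n P) = card (int ` P) + card ((\<lambda>i. - int i) ` ({1..n} - P))"
    unfolding sgn_set_def using fP by (intro card_Un_disjoint d) auto
  also have "\<dots> = card P + (n - card P)"
  proof -
    have "card (int ` P) = card P" by (simp add: card_image inj_on_def)
    moreover have "card ((\<lambda>i. - int i) ` ({1..n} - P)) = card ({1..n} - P)" by (simp add: card_image inj_on_def)
    ultimately show ?thesis using P fP by (simp add: card_Diff_subset finite_imageI)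
  qed
  also have "\<dots> = n" using P card_mono[of "{1..n}" P] by simp
  finally show ?thesis .
qed

lemma finite_sgn_set: "P \<subseteq> {1..n} \<Longrightarrow> finite (sgn_set n P)"
  unfolding sgn_set_def by (auto intro: finite_subset)

lemma sum_sub_swap:
  fixes g :: "nat \<Rightarrow> 'b::comm_semiring_1"
  assumes A: "finite A"
  shows "(\<Sum>P\<in>Pow A. \<Sum>G\<in>Pow (A - P). g (card G)) = (\<Sum>G\<in>Pow A. 2 ^ card (A - G) * g (card G))"
proof -
  have "(\<Sum>P\<in>Pow A. \<Sum>G\<in>Pow (A - P). g (card G)) = (\<Sum>P\<in>Pow A. \<Sum>G\<in>{G. G \<in> Pow A \<and> G \<inter> P = {}}. g (card G))"
    by (rule sum.cong[OF refl], rule sum.cong) auto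
  also have "\<dots> = (\<Sum>G\<in>Pow A. \<Sum>P\<in>{P. P \<in> Pow A \<and> G \<inter> P = {}}. g (card G))"
    by (rule sum.swap_restrict) (use A in auto)
  also have "\<dots> = (\<Sum>G\<in>Pow A. \<Sum>P\<in>Pow (A - G). g (card G))"
    by (rule sum.cong[OF refl], rule sum.cong) auto
  also have "\<dots> = (\<Sum>G\<in>Pow A. 2 ^ card (A - G) * g (card G))"
    using A by (simp add: card_Pow)
  finally show ?thesis .
qed

lemma dB_formula:
  "derangement_polyB n = (\<Sum>k\<le>n. of_nat (n choose k) * 2 ^ (n - k) * (monom 1 k * derangement_poly (n - k)))"
proof -
  let ?neg = "\<lambda>S::int set. {a \<in> S. a < 0}"
  let ?W = "\<lambda>S. {w. w permutes S \<and> fixS S w \<subseteq> ?neg S}"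
  let ?SS = "sgn_set n ` Pow {1..n}"
  let ?g = "\<lambda>k. monom 1 k * derangement_poly (n - k)"
  define H where "H m = (\<Sum>k\<le>m. of_nat (m choose k) * ?g k)" for m
  have finSS: "finite ?SS" by auto
  have der: "derangementsB n = Sigma ?SS ?W"
  proof -
    have "(\<not> (\<exists>a\<in>S. a > 0 \<and> w a = a)) \<longleftrightarrow> fixS S w \<subseteq> ?neg S" if "signed_set n S" for S and w :: "int \<Rightarrow> int"
    proof -
      have "0 \<notin> S" using that by (auto simp: signed_set_def)
      then show ?thesis by (auto simp: fixS_def) (metis linorder_neqE_linordered_idom)
    qed
    then show ?thesis
      unfolding derangementsB_def signed_perms_def using signed_set_iff[of n] by auto
  qed
  have exc: "excB (S, w) = card (fixS S w) + excG S w" if "w \<in> ?W S" "finite S" for S w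
  proof -
    have "{a\<in>S. w a > a \<or> (a < 0 \<and> w a = a)} = fixS S w \<union> {a\<in>S. w a > a}"
      using that by (auto simp: fixS_def)
    moreover have "fixS S w \<inter> {a\<in>S. w a > a} = {}" by (auto simp: fixS_def)
    ultimately show ?thesis unfolding excB_def excG_def using that(2)
      by (simp add: card_Un_disjoint fixS_def)
  qed
  have inner: "(\<Sum>w\<in>?W S. monom (1::int) (excB (S, w))) = H (card (?neg S))" if S: "S \<in> ?SS" for S
  proof -
    obtain P where P: "P \<subseteq> {1..n}" "S = sgn_set n P" using S by auto
    have fS: "finite S" using P finite_sgn_set by simp
    have cS: "card S = n" using P card_sgn_set by simp
    have "(\<Sum>w\<in>?W S. monom 1 (excB (S, w))) = (\<Sum>w\<in>?W S. monom (1::int) (card (fixS S w)) * monom 1 (excG S w))"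
      by (rule sum.cong[OF refl]) (simp add: exc[OF _ fS] mult_monom)
    also have "\<dots> = (\<Sum>F\<in>Pow (?neg S). monom 1 (card F) * derangement_poly (card S - card F))"
      by (rule fixdec) (use fS in auto)
    also have "\<dots> = H (card (?neg S))"
      unfolding H_def cS by (rule sum_pow_card) (use fS in auto)
    finally show ?thesis .
  qed
  have finW: "finite (?W S)" if "finite S" for S
    using finite_permutations[OF that] by (rule finite_subset[rotated]) auto
  have "derangement_polyB n = (\<Sum>S\<in>?SS. \<Sum>w\<in>?W S. monom (1::int) (excB (S, w)))"
    unfolding derangement_polyB_def der
    by (subst sum.Sigma) (use finSS finW finite_sgn_set in \<open>auto simp: case_prod_beta\<close>)
  also have "\<dots> = (\<Sum>S\<in>?SS. H (card (?neg S)))"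
    by (rule sum.cong[OF refl] inner)+
  also have "\<dots> = (\<Sum>P\<in>Pow {1..n}. H (card (?neg (sgn_set n P))))"
    by (rule sum.reindex[OF sgn_set_inj, unfolded comp_def])
  also have "\<dots> = (\<Sum>P\<in>Pow {1..n}. H (card ({1..n} - P)))"
    by (rule sum.cong[OF refl]) (simp add: card_neg_sgn_set card_Diff_subset finite_subset)
  also have "\<dots> = (\<Sum>P\<in>Pow {1..n}. \<Sum>G\<in>Pow ({1..n} - P). ?g (card G))"
    unfolding H_def by (rule sum.cong[OF refl], rule sum_pow_card[symmetric]) auto
  also have "\<dots> = (\<Sum>G\<in>Pow {1..n}. 2 ^ card ({1..n} - G) * ?g (card G))"
    by (rule sum_sub_swap) auto
  also have "\<dots> = (\<Sum>G\<in>Pow {1..n}. 2 ^ (n - card G) * ?g (card G))"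
    by (rule sum.cong[OF refl]) (simp add: card_Diff_subset finite_subset)
  also have "\<dots> = (\<Sum>k\<le>n. of_nat (n choose k) * (2 ^ (n - k) * ?g k))"
    using sum_pow_card[of "{1..n}" "\<lambda>k. 2 ^ (n - k) * ?g k"] by simp
  finally show ?thesis by (simp add: mult.assoc)
qed


definition Lop :: "nat \<Rightarrow> int poly \<Rightarrow> int poly" where
  "Lop n p = p + smult (of_nat n) (monom 1 1 * p) + monom 1 1 * (1 - monom 1 1) * pderiv p"

lemma pderiv_sum': "pderiv (sum f A) = (\<Sum>x\<in>A. pderiv (f x))"
  using higher_pderiv_sum[of 1 f A] by simp

lemma Lop_sum: "Lop n (sum f A) = (\<Sum>x\<in>A. Lop n (f x))"
  by (induction A rule: infinite_finite_induct) (simp_all add: Lop_def pderiv_add algebra_simps smult_add_right)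

lemma Lop_monom: "Lop n (monom 1 e) = monom (of_nat e + 1) e + monom (of_nat n - of_nat e) (Suc e)"
proof (cases e)
  case 0
  then show ?thesis by (simp add: Lop_def pderiv_monom mult_monom smult_monom)
next
  case (Suc k)
  have "Lop n (monom 1 e) = monom 1 e + monom (of_nat n) (Suc e) + (monom 1 1 - monom 1 2) * monom (of_nat e) k"
    unfolding Lop_def by (simp add: pderiv_monom mult_monom smult_monom Suc algebra_simps numeral_2_eq_2 power2_eq_square)
  also have "\<dots> = monom 1 e + monom (of_nat n) (Suc e) + monom (of_nat e) e - monom (of_nat e) (Suc e)"
    by (simp add: algebra_simps mult_monom Suc)
  also have "\<dots> = monom (of_nat e + 1) e + monom (of_nat n - of_nat e) (Suc e)"
    by (rule poly_eqI) (auto simp: coeff_monom)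
  finally show ?thesis .
qed

lemma exc_insert_case:
  fixes p :: "nat \<Rightarrow> nat"
  assumes p: "p permutes {1..n}" and i: "i \<in> {1..n}"
  shows "excG {1..Suc n} (Transposition.transpose (Suc n) (p i) \<circ> p) = Suc (card {x\<in>{1..n} - {i}. p x > x})"
proof -
  let ?t = "Transposition.transpose (Suc n) (p i)"
  have pi: "p i \<in> {1..n}" by (metis permutes_in_image[OF p] i)
  have pa: "p (Suc n) = Suc n" by (rule permutes_not_in[OF p]) simp
  have "{x\<in>{1..Suc n}. (?t \<circ> p) x > x} = insert i {x\<in>{1..n} - {i}. p x > x}"
  proof (rule set_eqI)
    fix x
    show "x \<in> {x\<in>{1..Suc n}. (?t \<circ> p) x > x} \<longleftrightarrow> x \<in> insert i {x\<in>{1..n} - {i}. p x > x}"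
    proof (cases "x = Suc n")
      case True
      have "(?t \<circ> p) x = p i" using True pa by simp
      then show ?thesis using True pi i by auto
    next
      case False
      note xn = False
      show ?thesis
      proof (cases "x = i")
        case True
        have "(?t \<circ> p) x = Suc n" using True by simp
        then show ?thesis using True i by auto
      next
        case False
        note xi = False
        show ?thesis
        proof (cases "x \<in> {1..n}")
          case True
          have "p x \<noteq> p i" using injD[OF permutes_inj[OF p]] False by blast
          moreover have "p x \<in> {1..n}" using permutes_in_image[OF p, of x] True by simp
          then have "p x \<noteq> Suc n" by auto
          ultimately have "(?t \<circ> p) x = p x" by simp
          then show ?thesis using xn False True by auto
        next
          case False
          then show ?thesis using xn xi i by auto
        qed
      qed
    qed
  qed
  moreover have "finite {x\<in>{1..n} - {i}. p x > x}" by auto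
  ultimately show ?thesis unfolding excG_def by simp
qed

lemma exc_slot_sum:
  fixes p :: "nat \<Rightarrow> nat"
  assumes p: "p permutes {1..n}"
  shows "(\<Sum>b\<in>{1..Suc n}. monom (1::int) (excG {1..Suc n} (Transposition.transpose (Suc n) b \<circ> p)))
     = Lop n (monom 1 (excG {1..n} p))"
proof -
  let ?e = "excG {1..n} p"
  let ?E = "{x\<in>{1..n}. p x > x}"
  have cE: "card ?E = ?e" by (simp add: excG_def)
  have pa: "p (Suc n) = Suc n" by (rule permutes_not_in[OF p]) simp
  have e_le: "?e \<le> n" unfolding excG_def by (rule order_trans[OF card_mono[of "{1..n}"]]) auto
  have split: "{1..Suc n} = insert (Suc n) {1..n}" by auto
  have a: "excG {1..Suc n} (Transposition.transpose (Suc n) (Suc n) \<circ> p) = ?e"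
  proof -
    have "{x\<in>{1..Suc n}. p x > x} = ?E" using pa by (auto simp: le_Suc_eq)
    then show ?thesis by (simp add: excG_def)
  qed
  have b: "(\<Sum>b\<in>{1..n}. monom (1::int) (excG {1..Suc n} (Transposition.transpose (Suc n) b \<circ> p)))
      = (\<Sum>i\<in>{1..n}. monom 1 (Suc (card {x\<in>{1..n} - {i}. p x > x})))"
  proof -
    have bij: "bij_betw p {1..n} {1..n}" using p permutes_imp_bij by blast
    show ?thesis
      by (subst sum.reindex_bij_betw[OF bij, symmetric]) (rule sum.cong[OF refl], simp only: exc_insert_case[OF p])
  qed
  have c: "(\<Sum>i\<in>{1..n}. monom (1::int) (Suc (card {x\<in>{1..n} - {i}. p x > x})))
      = of_nat ?e * monom 1 ?e + of_nat (n - ?e) * monom 1 (Suc ?e)"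
  proof -
    have s: "(\<Sum>i\<in>{1..n}. monom (1::int) (Suc (card {x\<in>{1..n} - {i}. p x > x})))
       = (\<Sum>i\<in>{1..n} - ?E. monom (1::int) (Suc (card {x\<in>{1..n} - {i}. p x > x})))
         + (\<Sum>i\<in>?E. monom (1::int) (Suc (card {x\<in>{1..n} - {i}. p x > x})))"
      by (rule sum.subset_diff) auto
    have s1: "(\<Sum>i\<in>?E. monom (1::int) (Suc (card {x\<in>{1..n} - {i}. p x > x}))) = (\<Sum>i\<in>?E. monom 1 ?e)"
    proof (rule sum.cong[OF refl])
      fix i assume i: "i \<in> ?E"
      have "{x\<in>{1..n} - {i}. p x > x} = ?E - {i}" by auto
      then have "card {x\<in>{1..n} - {i}. p x > x} = ?e - 1" using i cE by simp
      moreover have "?e \<ge> 1" using i cE by (metis (no_types, lifting) One_nat_def Suc_leI card_gt_0_iff empty_iff finite_subset finite_atLeastAtMost mem_Collect_eq subsetI)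
      ultimately show "monom (1::int) (Suc (card {x\<in>{1..n} - {i}. p x > x})) = monom 1 ?e" by simp
    qed
    have s2: "(\<Sum>i\<in>{1..n} - ?E. monom (1::int) (Suc (card {x\<in>{1..n} - {i}. p x > x}))) = (\<Sum>i\<in>{1..n} - ?E. monom 1 (Suc ?e))"
    proof (rule sum.cong[OF refl])
      fix i assume i: "i \<in> {1..n} - ?E"
      have "{x\<in>{1..n} - {i}. p x > x} = ?E" using i by auto
      then show "monom (1::int) (Suc (card {x\<in>{1..n} - {i}. p x > x})) = monom 1 (Suc ?e)" using cE by simp
    qed
    have "card ({1..n} - ?E) = card {1..n} - card ?E" by (rule card_Diff_subset) auto
    then have cD: "card ({1..n} - ?E) = n - ?e" using cE by simp
    show ?thesis unfolding s s1 s2 using cE cD by (simp add: add.commute)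
  qed
  have "(\<Sum>b\<in>{1..Suc n}. monom (1::int) (excG {1..Suc n} (Transposition.transpose (Suc n) b \<circ> p)))
     = monom 1 ?e + (of_nat ?e * monom 1 ?e + of_nat (n - ?e) * monom 1 (Suc ?e))"
  proof -
    have "(\<Sum>b\<in>{1..Suc n}. monom (1::int) (excG {1..Suc n} (Transposition.transpose (Suc n) b \<circ> p)))
      = (\<Sum>b\<in>insert (Suc n) {1..n}. monom (1::int) (excG {1..Suc n} (Transposition.transpose (Suc n) b \<circ> p)))"
      by (simp only: split)
    also have "\<dots> = monom (1::int) (excG {1..Suc n} (Transposition.transpose (Suc n) (Suc n) \<circ> p))
       + (\<Sum>b\<in>{1..n}. monom (1::int) (excG {1..Suc n} (Transposition.transpose (Suc n) b \<circ> p)))"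
      by (rule sum.insert) auto
    finally show ?thesis by (simp only: a b c)
  qed
  also have "\<dots> = Lop n (monom 1 ?e)"
    unfolding Lop_monom of_nat_mult_conv_smult using e_le
    by (intro poly_eqI) (auto simp: coeff_monom of_nat_diff)
  finally show ?thesis .
qed


lemma inj_insert_perm:
  assumes "a \<notin> S"
  shows "inj_on (\<lambda>(b, p). Transposition.transpose a b \<circ> p) (insert a S \<times> {p. p permutes S})"
proof (rule inj_onI, clarify)
  fix b p c q
  assume bp: "b \<in> insert a S" "p permutes S" and cq: "c \<in> insert a S" "q permutes S"
    and eq: "Transposition.transpose a b \<circ> p = Transposition.transpose a c \<circ> q"
  have pa: "p a = a" "q a = a" using bp cq assms by (auto intro: permutes_not_in)
  have "b = (Transposition.transpose a b \<circ> p) a" using pa by simp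
  also have "\<dots> = (Transposition.transpose a c \<circ> q) a" using eq by simp
  also have "\<dots> = c" using pa by simp
  finally have bc: "b = c" .
  have "Transposition.transpose a b \<circ> (Transposition.transpose a b \<circ> p) = Transposition.transpose a b \<circ> (Transposition.transpose a b \<circ> q)"
    using eq bc by simp
  then have "p = q" by (simp add: o_assoc)
  with bc show "b = c \<and> p = q" by simp
qed

lemma Pe_rec: "Pe (Suc n) = Lop n (Pe n)"
proof -
  have S: "{1..Suc n} = insert (Suc n) {1..n}" by auto
  let ?g = "\<lambda>(b, p). Transposition.transpose (Suc n) b \<circ> p"
  let ?f = "\<lambda>u. monom (1::int) (excG {1..Suc n} u)"
  have img: "{u. u permutes {1..Suc n}} = ?g ` (insert (Suc n) {1..n} \<times> {p. p permutes {1..n}})"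
  proof -
    have e: "{(b, p). b \<in> insert (Suc n) {1..n} \<and> p \<in> {p. p permutes {1..n}}} = insert (Suc n) {1..n} \<times> {p. p permutes {1..n}}" by auto
    show ?thesis unfolding S using permutes_insert[of "Suc n" "{1..n}"] unfolding e .
  qed
  have inj: "inj_on ?g (insert (Suc n) {1..n} \<times> {p. p permutes {1..n}})"
    by (rule inj_insert_perm) simp
  have "Pe (Suc n) = (\<Sum>u\<in>{u. u permutes {1..Suc n}}. ?f u)" by (simp add: Pe_def)
  also have "\<dots> = (\<Sum>x\<in>insert (Suc n) {1..n} \<times> {p. p permutes {1..n}}. ?f (?g x))"
    unfolding img by (subst sum.reindex[OF inj]) (simp only: comp_def)
  also have "\<dots> = (\<Sum>b\<in>insert (Suc n) {1..n}. \<Sum>p\<in>{p. p permutes {1..n}}. ?f (?g (b, p)))"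
    by (subst sum.cartesian_product) (rule sum.cong, auto)
  also have "\<dots> = (\<Sum>p\<in>{p. p permutes {1..n}}. \<Sum>b\<in>insert (Suc n) {1..n}. ?f (?g (b, p)))"
    by (rule sum.swap)
  also have "\<dots> = (\<Sum>p\<in>{p. p permutes {1..n}}. Lop n (monom 1 (excG {1..n} p)))"
  proof (rule sum.cong[OF refl])
    fix p assume "p \<in> {p. p permutes {1..n}}"
    then have p: "p permutes {1..n}" by simp
    show "(\<Sum>b\<in>insert (Suc n) {1..n}. ?f (?g (b, p))) = Lop n (monom 1 (excG {1..n} p))"
      using exc_slot_sum[OF p] unfolding S by simp
  qed
  also have "\<dots> = Lop n (Pe n)" by (simp add: Pe_def Lop_sum)
  finally show ?thesis .
qed


fun desl :: "'a::linorder list \<Rightarrow> nat" where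
  "desl (x # y # zs) = (if y < x then 1 else 0) + desl (y # zs)"
| "desl _ = 0"

lemma desl_append:
  "desl (xs @ ys) = desl xs + desl ys + (if xs \<noteq> [] \<and> ys \<noteq> [] \<and> hd ys < last xs then 1 else 0)"
proof (induction xs rule: desl.induct)
  case (1 x y zs)
  then show ?case by simp
next
  case ("2_1")
  then show ?case by simp
next
  case ("2_2" x)
  then show ?case by (cases ys) auto
qed

lemma desl_max_cons:
  assumes "\<forall>y\<in>set R. y < M"
  shows "desl (M # R) = (if R = [] then 0 else Suc (desl R))"
  using assms by (cases R) auto

lemma desl_ins_max:
  assumes "\<forall>y\<in>set L. y < M" "\<forall>y\<in>set R. y < M"
  shows "desl (L @ M # R) = desl L + desl R + (if R = [] then 0 else 1)"
proof -
  have "L = [] \<or> \<not> M < last L" using assms(1) by (metis last_in_set order_less_asym)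
  then show ?thesis using assms by (simp add: desl_append desl_max_cons)
qed

lemma desl_nth: "desl xs = card {i. Suc i < length xs \<and> xs ! Suc i < xs ! i}"
proof (induction xs rule: desl.induct)
  case (1 x y zs)
  let ?S = "{i. Suc i < length (y # zs) \<and> (y # zs) ! Suc i < (y # zs) ! i}"
  have "{i. Suc i < length (x # y # zs) \<and> (x # y # zs) ! Suc i < (x # y # zs) ! i}
        = (if y < x then insert 0 (Suc ` ?S) else Suc ` ?S)"
  proof (intro set_eqI)
    fix i show "i \<in> {i. Suc i < length (x # y # zs) \<and> (x # y # zs) ! Suc i < (x # y # zs) ! i}
       \<longleftrightarrow> i \<in> (if y < x then insert 0 (Suc ` ?S) else Suc ` ?S)"
      by (cases i) auto
  qed
  moreover have "finite ?S" by auto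
  ultimately show ?case using 1 by (simp add: card_image)
qed auto

lemma desl_map_mono:
  assumes "\<forall>a\<in>set xs. \<forall>b\<in>set xs. a < b \<longrightarrow> h a < h b"
  shows "desl (map h xs) = desl xs"
  using assms
proof (induction xs rule: desl.induct)
  case (1 x y zs)
  have xs: "x \<in> set (x # y # zs)" "y \<in> set (x # y # zs)" by auto
  have "h y < h x \<longleftrightarrow> y < x"
  proof (cases x y rule: linorder_cases)
    case less then have "h x < h y" using 1(2) xs by blast
    then show ?thesis using less by (meson order_less_asym)
  next
    case equal then show ?thesis by simp
  next
    case greater then show ?thesis using 1(2) xs by blast
  qed
  then show ?case using 1 by simp
qed auto

definition Pd :: "nat \<Rightarrow> int poly" where
  "Pd k = (\<Sum>xs\<in>permutations_of_set {1..k}. monom 1 (desl xs))"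

lemma Pd_std:
  fixes B :: "'a::linorder set"
  assumes "finite B"
  shows "(\<Sum>xs\<in>permutations_of_set B. monom (1::int) (desl xs)) = Pd (card B)"
proof -
  obtain h where h: "bij_betw h {1..card B} B"
    "\<forall>i\<in>{1..card B}. \<forall>j\<in>{1..card B}. i < j \<longrightarrow> h i < h j"
    using exists_mono_bij[OF assms] by blast
  have inj: "inj_on h {1..card B}" and img: "h ` {1..card B} = B" using h(1) by (auto simp: bij_betw_def)
  have P: "permutations_of_set B = map h ` permutations_of_set {1..card B}"
    using permutations_of_set_image_inj[OF inj] img by simp
  have injm: "inj_on (map h) (permutations_of_set {1..card B})"
  proof (rule inj_onI)
    fix xs ys assume xs: "xs \<in> permutations_of_set {1..card B}" and ys: "ys \<in> permutations_of_set {1..card B}"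
      and eq: "map h xs = map h ys"
    have "inj_on h (set xs \<union> set ys)" using xs ys inj by (auto simp: permutations_of_set_def intro: inj_on_subset)
    then show "xs = ys" using eq map_inj_on by blast
  qed
  have "(\<Sum>xs\<in>permutations_of_set B. monom (1::int) (desl xs))
      = (\<Sum>xs\<in>permutations_of_set {1..card B}. monom (1::int) (desl (map h xs)))"
    unfolding P by (subst sum.reindex[OF injm]) (simp add: comp_def)
  also have "\<dots> = Pd (card B)"
    unfolding Pd_def
    by (rule sum.cong[OF refl], subst desl_map_mono) (use h(2) in \<open>auto simp: permutations_of_set_def\<close>)
  finally show ?thesis .
qed

lemma tw_split:
  assumes "M \<notin> set L"
  shows "takeWhile (\<lambda>x. x \<noteq> M) (L @ M # R) = L" "dropWhile (\<lambda>x. x \<noteq> M) (L @ M # R) = M # R"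
proof -
  have "\<And>x. x \<in> set L \<Longrightarrow> x \<noteq> M" using assms by auto
  then show "takeWhile (\<lambda>x. x \<noteq> M) (L @ M # R) = L" "dropWhile (\<lambda>x. x \<noteq> M) (L @ M # R) = M # R"
    by (simp_all add: takeWhile_append2 dropWhile_append2)
qed

definition QQ :: "'a set \<Rightarrow> ('a list \<times> 'a list) set" where
  "QQ A = {(L, R). distinct (L @ R) \<and> set (L @ R) = A}"

lemma QQ_bij:
  assumes M: "M \<notin> A"
  shows "bij_betw (\<lambda>(L, R). L @ M # R) (QQ A) (permutations_of_set (insert M A))"
proof (rule bij_betw_byWitness[where f' = "\<lambda>xs. (takeWhile (\<lambda>x. x \<noteq> M) xs, tl (dropWhile (\<lambda>x. x \<noteq> M) xs))"], goal_cases)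
  case 1
  have aux: "M \<notin> set L" if "(L, R) \<in> QQ A" for L R using that M by (auto simp: QQ_def)
  show ?case
    apply (intro ballI)
    subgoal for a by (cases a) (simp add: tw_split aux)
    done
next
  case 2
  show ?case
  proof
    fix xs assume "xs \<in> permutations_of_set (insert M A)"
    then have "M \<in> set xs" by (auto simp: permutations_of_set_def)
    then obtain L R where xs: "xs = L @ M # R" "M \<notin> set L" by (meson split_list_first)
    then show "(case (takeWhile (\<lambda>x. x \<noteq> M) xs, tl (dropWhile (\<lambda>x. x \<noteq> M) xs)) of (L, R) \<Rightarrow> L @ M # R) = xs"
      by (simp add: tw_split)
  qed
next
  case 3
  show ?case using M by (auto simp: QQ_def permutations_of_set_def)
next
  case 4
  show ?case
  proof clarify
    fix xs assume "xs \<in> permutations_of_set (insert M A)"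
    then have d: "distinct xs" "set xs = insert M A" by (auto simp: permutations_of_set_def)
    have "M \<in> set xs" using d by simp
    then obtain L R where xs: "xs = L @ M # R" "M \<notin> set L" by (meson split_list_first)
    then show "(takeWhile (\<lambda>x. x \<noteq> M) xs, tl (dropWhile (\<lambda>x. x \<noteq> M) xs)) \<in> QQ A"
      using d M by (auto simp: tw_split QQ_def)
  qed
qed

lemma sum_perm_insert:
  assumes M: "M \<notin> A"
  shows "(\<Sum>xs\<in>permutations_of_set (insert M A). f xs) = (\<Sum>(L, R)\<in>QQ A. f (L @ M # R))"
  using sum.reindex_bij_betw[OF QQ_bij[OF M], of f] by (simp add: case_prod_beta')


lemma QQ_slots:
  "bij_betw (\<lambda>(ys, j). (take j ys, drop j ys)) (permutations_of_set A \<times> {0..card A}) (QQ A)"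
proof (rule bij_betw_byWitness[where f' = "\<lambda>(L, R). (L @ R, length L)"], goal_cases)
  case 1
  then show ?case by (auto simp: permutations_of_set_def distinct_card[symmetric])
next
  case 2
  then show ?case by auto
next
  case 3
  then show ?case by (auto simp: QQ_def permutations_of_set_def simp del: distinct_append set_append)
next
  case 4
  have aux: "(L @ R, length L) \<in> permutations_of_set A \<times> {0..card A}" if "(L, R) \<in> QQ A" for L R
  proof -
    have "distinct (L @ R)" "set (L @ R) = A" using that by (auto simp: QQ_def)
    moreover then have "length (L @ R) = card A" using distinct_card by metis
    ultimately show ?thesis by (auto simp: permutations_of_set_def)
  qed
  show ?case using aux by fastforce
qed

lemma sum_QQ_slots:
  "(\<Sum>(L, R)\<in>QQ A. g L R) = (\<Sum>ys\<in>permutations_of_set A. \<Sum>j\<in>{0..card A}. g (take j ys) (drop j ys))"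
proof -
  have "(\<Sum>(L, R)\<in>QQ A. g L R) = (\<Sum>x\<in>permutations_of_set A \<times> {0..card A}. (\<lambda>(L, R). g L R) ((\<lambda>(ys, j). (take j ys, drop j ys)) x))"
    using sum.reindex_bij_betw[OF QQ_slots, of "\<lambda>(L, R). g L R"] by simp
  also have "\<dots> = (\<Sum>ys\<in>permutations_of_set A. \<Sum>j\<in>{0..card A}. g (take j ys) (drop j ys))"
    by (subst sum.cartesian_product) (rule sum.cong, auto)
  finally show ?thesis .
qed

lemma slot_sum:
  fixes ys :: "'a::linorder list"
  assumes n: "length ys = n"
  shows "(\<Sum>j\<in>{0..n}. monom (1::int) (desl (take j ys) + desl (drop j ys) + (if j < n then 1 else 0)))
       = Lop n (monom 1 (desl ys))"
proof -
  let ?D = "{j. 0 < j \<and> j < n \<and> ys ! j < ys ! (j - 1)}"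
  let ?d = "desl ys"
  have cD: "card ?D = ?d"
  proof -
    have "?D = Suc ` {i. Suc i < length ys \<and> ys ! Suc i < ys ! i}"
      using n by (auto simp: image_iff) (metis Suc_pred)
    then show ?thesis by (simp add: desl_nth card_image)
  qed
  have Dsub: "?D \<subseteq> {0..<n}" by auto
  have dle: "?d \<le> n" using card_mono[OF _ Dsub] cD by simp
  have val: "desl (take j ys) + desl (drop j ys) + (if j < n then 1 else 0)
      = (if j = n \<or> j \<in> ?D then ?d else Suc ?d)" if j: "j \<le> n" for j
  proof -
    have split: "?d = desl (take j ys) + desl (drop j ys) + (if take j ys \<noteq> [] \<and> drop j ys \<noteq> [] \<and> hd (drop j ys) < last (take j ys) then 1 else 0)"
      using desl_append[of "take j ys" "drop j ys"] by simp
    show ?thesis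
    proof (cases "j = n")
      case True then show ?thesis using split n by simp
    next
      case False
      then have jn: "j < n" using j by simp
      have hd: "hd (drop j ys) = ys ! j" using jn n by (simp add: hd_drop_conv_nth)
      have nz: "drop j ys \<noteq> []" using jn n by simp
      show ?thesis
      proof (cases "j = 0")
        case True then show ?thesis using split jn by simp
      next
        case False
        have tn: "take j ys \<noteq> []" using False jn n by (cases ys) auto
        have last: "last (take j ys) = ys ! (j - 1)" using tn False jn n by (simp add: last_conv_nth min_def)
        have "take j ys \<noteq> []" using tn .
        then show ?thesis using split jn hd nz last False by auto
      qed
    qed
  qed
  have "(\<Sum>j\<in>{0..n}. monom (1::int) (desl (take j ys) + desl (drop j ys) + (if j < n then 1 else 0)))
      = (\<Sum>j\<in>{0..n}. monom (1::int) (if j = n \<or> j \<in> ?D then ?d else Suc ?d))"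
    by (rule sum.cong[OF refl]) (simp add: val)
  also have "\<dots> = (\<Sum>j\<in>insert n ({0..<n} - ?D \<union> ?D). monom (1::int) (if j = n \<or> j \<in> ?D then ?d else Suc ?d))"
    by (rule sum.cong) (use Dsub in auto)
  also have "\<dots> = monom 1 ?d + ((\<Sum>j\<in>{0..<n} - ?D. monom 1 (Suc ?d)) + (\<Sum>j\<in>?D. monom 1 ?d))"
  proof -
    let ?F = "\<lambda>j. monom (1::int) (if j = n \<or> j \<in> ?D then ?d else Suc ?d)"
    have "(\<Sum>j\<in>insert n ({0..<n} - ?D \<union> ?D). ?F j) = ?F n + (\<Sum>j\<in>({0..<n} - ?D) \<union> ?D. ?F j)"
      by (rule sum.insert) auto
    also have "(\<Sum>j\<in>({0..<n} - ?D) \<union> ?D. ?F j) = (\<Sum>j\<in>{0..<n} - ?D. ?F j) + (\<Sum>j\<in>?D. ?F j)"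
      by (rule sum.union_disjoint) auto
    also have "(\<Sum>j\<in>{0..<n} - ?D. ?F j) = (\<Sum>j\<in>{0..<n} - ?D. monom 1 (Suc ?d))"
      by (rule sum.cong) auto
    also have "(\<Sum>j\<in>?D. ?F j) = (\<Sum>j\<in>?D. monom 1 ?d)"
      by (rule sum.cong) auto
    finally show ?thesis by simp
  qed
  also have "\<dots> = monom 1 ?d + (of_nat (n - ?d) * monom 1 (Suc ?d) + of_nat ?d * monom 1 ?d)"
  proof -
    have "card ({0..<n} - ?D) = n - ?d" using cD Dsub by (simp add: card_Diff_subset finite_subset)
    then show ?thesis using cD by simp
  qed
  also have "\<dots> = Lop n (monom 1 ?d)"
    unfolding Lop_monom of_nat_mult_conv_smult using dle
    by (intro poly_eqI) (auto simp: coeff_monom of_nat_diff)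
  finally show ?thesis .
qed

lemma Pd_QQ: "Pd (Suc n) = (\<Sum>(L, R)\<in>QQ {1..n}. monom 1 (desl L + desl R + (if R = [] then 0 else 1)))"
proof -
  have S: "{1..Suc n} = insert (Suc n) {1..n}" by auto
  have "Pd (Suc n) = (\<Sum>(L, R)\<in>QQ {1..n}. monom 1 (desl (L @ Suc n # R)))"
    unfolding Pd_def S by (rule sum_perm_insert) simp
  also have "\<dots> = (\<Sum>(L, R)\<in>QQ {1..n}. monom 1 (desl L + desl R + (if R = [] then 0 else 1)))"
  proof (rule sum.cong[OF refl], clarify)
    fix L R assume "(L, R) \<in> QQ {1..n}"
    then have e: "set (L @ R) = {1..n}" by (simp add: QQ_def del: set_append)
    have "set L \<subseteq> {1..n}" using e by (metis Un_upper1 set_append)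
    moreover have "set R \<subseteq> {1..n}" using e by (metis Un_upper2 set_append)
    ultimately have "\<forall>y\<in>set L. y < Suc n" "\<forall>y\<in>set R. y < Suc n" by auto
    then show "monom 1 (desl (L @ Suc n # R)) = (monom 1 (desl L + desl R + (if R = [] then 0 else 1)) :: int poly)"
      by (simp add: desl_ins_max)
  qed
  finally show ?thesis .
qed

lemma Pd_rec: "Pd (Suc n) = Lop n (Pd n)"
proof -
  have "Pd (Suc n) = (\<Sum>ys\<in>permutations_of_set {1..n}. \<Sum>j\<in>{0..n}.
         monom 1 (desl (take j ys) + desl (drop j ys) + (if drop j ys = [] then 0 else 1)))"
    unfolding Pd_QQ using sum_QQ_slots[of "\<lambda>L R. monom (1::int) (desl L + desl R + (if R = [] then 0 else 1))" "{1..n}"]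
    by simp
  also have "\<dots> = (\<Sum>ys\<in>permutations_of_set {1..n}. Lop n (monom 1 (desl ys)))"
  proof (rule sum.cong[OF refl])
    fix ys assume "ys \<in> permutations_of_set {1..n}"
    then have len: "length ys = n" using length_finite_permutations_of_set by fastforce
    have "(\<Sum>j\<in>{0..n}. monom (1::int) (desl (take j ys) + desl (drop j ys) + (if drop j ys = [] then 0 else 1)))
        = (\<Sum>j\<in>{0..n}. monom (1::int) (desl (take j ys) + desl (drop j ys) + (if j < n then 1 else 0)))"
      by (rule sum.cong[OF refl]) (use len in auto)
    also have "\<dots> = Lop n (monom 1 (desl ys))" by (rule slot_sum[OF len])
    finally show "(\<Sum>j\<in>{0..n}. monom (1::int) (desl (take j ys) + desl (drop j ys) + (if drop j ys = [] then 0 else 1)))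
        = Lop n (monom 1 (desl ys))" .
  qed
  also have "\<dots> = Lop n (Pd n)" by (simp add: Pd_def Lop_sum)
  finally show ?thesis .
qed

lemma Pd_Pe: "Pd n = Pe n"
proof (induction n)
  case 0
  have "{u. u permutes ({}::nat set)} = {id}" by (auto simp: permutes_empty)
  then show ?case by (simp add: Pd_def Pe_def excG_def)
next
  case (Suc n)
  then show ?case by (simp add: Pd_rec Pe_rec)
qed


lemma finite_QQ: "finite A \<Longrightarrow> finite (QQ A)"
  using bij_betw_finite[OF QQ_slots[of A]] by simp

lemma QQ_fiber:
  assumes "B \<subseteq> A"
  shows "{x\<in>QQ A. (case x of (L, R) \<Rightarrow> set L) = B} = permutations_of_set B \<times> permutations_of_set (A - B)"
proof (rule set_eqI, clarify, rule iffI)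
  fix L R assume "(L, R) \<in> {x\<in>QQ A. (case x of (L, R) \<Rightarrow> set L) = B}"
  then have h: "distinct L" "distinct R" "set L \<inter> set R = {}" "set L \<union> set R = A" "set L = B"
    by (auto simp: QQ_def)
  then have "set R = A - B" by blast
  then show "(L, R) \<in> permutations_of_set B \<times> permutations_of_set (A - B)"
    using h by (auto simp: permutations_of_set_def)
next
  fix L R assume "(L, R) \<in> permutations_of_set B \<times> permutations_of_set (A - B)"
  then have h: "distinct L" "distinct R" "set L = B" "set R = A - B"
    by (auto simp: permutations_of_set_def)
  then show "(L, R) \<in> {x\<in>QQ A. (case x of (L, R) \<Rightarrow> set L) = B}"
    using assms by (auto simp: QQ_def)
qed

lemma Rfac:
  fixes C :: "nat set"
  assumes "finite C"
  shows "(\<Sum>R\<in>permutations_of_set C. monom (1::int) (desl R + (if R = [] then 0 else 1)))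
       = (if C = {} then 1 else monom 1 1 * Pd (card C))"
proof (cases "C = {}")
  case True then show ?thesis by simp
next
  case False
  have "(\<Sum>R\<in>permutations_of_set C. monom (1::int) (desl R + (if R = [] then 0 else 1)))
      = (\<Sum>R\<in>permutations_of_set C. monom 1 1 * monom (1::int) (desl R))"
  proof (rule sum.cong[OF refl])
    fix R assume "R \<in> permutations_of_set C"
    then have "R \<noteq> []" using False by (auto simp: permutations_of_set_def)
    then show "monom (1::int) (desl R + (if R = [] then 0 else 1)) = monom 1 1 * monom 1 (desl R)"
      by (simp add: mult_monom)
  qed
  also have "\<dots> = monom 1 1 * Pd (card C)"
    by (simp add: sum_distrib_left[symmetric] Pd_std[OF assms])
  finally show ?thesis using False by simp
qed

lemma Pd_split: "Pd (Suc n) = (\<Sum>k\<le>n. of_nat (n choose k) * (Pd k * (if k = n then 1 else monom 1 1 * Pd (n - k))))"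
proof -
  let ?A = "{1..n}"
  let ?f = "\<lambda>(L, R). monom (1::int) (desl L + desl R + (if R = [] then 0 else 1))"
  have "Pd (Suc n) = (\<Sum>x\<in>QQ ?A. ?f x)" unfolding Pd_QQ by simp
  also have "\<dots> = (\<Sum>B\<in>Pow ?A. \<Sum>x\<in>{x\<in>QQ ?A. (case x of (L, R) \<Rightarrow> set L) = B}. ?f x)"
    by (rule sum.group[symmetric], rule finite_QQ, auto simp: QQ_def)
  also have "\<dots> = (\<Sum>B\<in>Pow ?A. Pd (card B) * (if card B = n then 1 else monom 1 1 * Pd (n - card B)))"
  proof (rule sum.cong[OF refl])
    fix B assume B: "B \<in> Pow ?A"
    have fB: "finite B" "finite (?A - B)" using B finite_subset by auto
    have "(\<Sum>x\<in>{x\<in>QQ ?A. (case x of (L, R) \<Rightarrow> set L) = B}. ?f x)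
        = (\<Sum>x\<in>permutations_of_set B \<times> permutations_of_set (?A - B). ?f x)"
      using QQ_fiber[of B ?A] B by simp
    also have "\<dots> = (\<Sum>L\<in>permutations_of_set B. \<Sum>R\<in>permutations_of_set (?A - B).
                       monom (1::int) (desl L) * monom 1 (desl R + (if R = [] then 0 else 1)))"
      by (subst sum.cartesian_product) (rule sum.cong, auto simp: mult_monom add.assoc)
    also have "\<dots> = (\<Sum>L\<in>permutations_of_set B. monom (1::int) (desl L))
                   * (\<Sum>R\<in>permutations_of_set (?A - B). monom 1 (desl R + (if R = [] then 0 else 1)))"
      by (simp add: sum_product)
    also have "\<dots> = Pd (card B) * (if ?A - B = {} then 1 else monom 1 1 * Pd (card (?A - B)))"
      by (simp only: Pd_std[OF fB(1)] Rfac[OF fB(2)])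
    also have "\<dots> = Pd (card B) * (if card B = n then 1 else monom 1 1 * Pd (n - card B))"
    proof -
      have c: "card (?A - B) = n - card B" using B by (simp add: card_Diff_subset finite_subset)
      have "?A - B = {} \<longleftrightarrow> card B = n"
      proof
        assume "?A - B = {}" then have "B = ?A" using B by auto
        then show "card B = n" by simp
      next
        assume "card B = n" then have "card (?A - B) = 0" using c by simp
        then show "?A - B = {}" using fB by simp
      qed
      then show ?thesis using c by simp
    qed
    finally show "(\<Sum>x\<in>{x\<in>QQ ?A. (case x of (L, R) \<Rightarrow> set L) = B}. ?f x)
        = Pd (card B) * (if card B = n then 1 else monom 1 1 * Pd (n - card B))" .
  qed
  also have "\<dots> = (\<Sum>k\<le>n. of_nat (n choose k) * (Pd k * (if k = n then 1 else monom 1 1 * Pd (n - k))))"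
    using sum_pow_card[of ?A "\<lambda>k. Pd k * (if k = n then 1 else monom 1 1 * Pd (n - k))"] by simp
  finally show ?thesis .
qed

lemma perm_list_bij:
  "bij_betw (\<lambda>\<sigma>. map \<sigma> [1..<Suc m]) {\<sigma>. \<sigma> permutes {1..m}} (permutations_of_set {1..m})"
proof -
  let ?f = "\<lambda>\<sigma>. map \<sigma> [1..<Suc m]"
  have inj: "inj_on ?f {\<sigma>. \<sigma> permutes {1..m}}"
  proof (rule inj_onI)
    fix \<sigma> \<tau> assume s: "\<sigma> \<in> {\<sigma>. \<sigma> permutes {1..m}}" and t: "\<tau> \<in> {\<sigma>. \<sigma> permutes {1..m}}"
      and eq: "?f \<sigma> = ?f \<tau>"
    show "\<sigma> = \<tau>"
    proof
      fix x show "\<sigma> x = \<tau> x"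
      proof (cases "x \<in> {1..m}")
        case True
        then have "x \<in> set [1..<Suc m]" by auto
        then show ?thesis using eq by (metis map_eq_conv)
      next
        case False
        then show ?thesis using s t by (simp add: permutes_not_in)
      qed
    qed
  qed
  have sub: "?f ` {\<sigma>. \<sigma> permutes {1..m}} \<subseteq> permutations_of_set {1..m}"
  proof clarify
    fix \<sigma> assume s: "\<sigma> permutes {1..m}"
    have "set (map \<sigma> [1..<Suc m]) = \<sigma> ` {1..m}" by auto
    also have "\<dots> = {1..m}" using permutes_image[OF s] .
    finally have "set (map \<sigma> [1..<Suc m]) = {1..m}" .
    moreover have "distinct (map \<sigma> [1..<Suc m])"
      using permutes_inj_on[OF s] by (simp add: distinct_map inj_on_subset)
    ultimately show "map \<sigma> [1..<Suc m] \<in> permutations_of_set {1..m}" by (auto simp: permutations_of_set_def)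
  qed
  have "card (?f ` {\<sigma>. \<sigma> permutes {1..m}}) = card {\<sigma>. \<sigma> permutes {1..m}}" by (rule card_image[OF inj])
  also have "\<dots> = fact m" by (rule card_permutations) auto
  also have "\<dots> = card (permutations_of_set {1..m})" by simp
  finally have "card (?f ` {\<sigma>. \<sigma> permutes {1..m}}) = card (permutations_of_set {1..m})" .
  then have "?f ` {\<sigma>. \<sigma> permutes {1..m}} = permutations_of_set {1..m}"
    using sub by (intro card_subset_eq) auto
  then show ?thesis using inj by (simp add: bij_betw_def)
qed

lemma des_desl: "des m \<sigma> = desl (map \<sigma> [1..<Suc m])"
proof -
  have "{i\<in>{1..m-1}. \<sigma> i > \<sigma> (i+1)} = Suc ` {i. Suc i < m \<and> \<sigma> (Suc (Suc i)) < \<sigma> (Suc i)}"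
  proof (intro set_eqI iffI)
    fix x assume x: "x \<in> {i\<in>{1..m-1}. \<sigma> i > \<sigma> (i+1)}"
    then have "x = Suc (x - 1)" "Suc (x - 1) < m" by auto
    then show "x \<in> Suc ` {i. Suc i < m \<and> \<sigma> (Suc (Suc i)) < \<sigma> (Suc i)}"
      using x by (intro image_eqI[of _ _ "x - 1"]) auto
  next
    fix x assume "x \<in> Suc ` {i. Suc i < m \<and> \<sigma> (Suc (Suc i)) < \<sigma> (Suc i)}"
    then show "x \<in> {i\<in>{1..m-1}. \<sigma> i > \<sigma> (i+1)}" by auto
  qed
  moreover have "{i. Suc i < length (map \<sigma> [1..<Suc m]) \<and> map \<sigma> [1..<Suc m] ! Suc i < map \<sigma> [1..<Suc m] ! i}
     = {i. Suc i < m \<and> \<sigma> (Suc (Suc i)) < \<sigma> (Suc i)}"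
    by (auto simp: nth_map simp del: upt_Suc)
  ultimately show ?thesis unfolding des_def desl_nth by (simp add: card_image)
qed

lemma eulerian_Pd:
  assumes "m \<noteq> 0" shows "eulerian_poly m = Pd m"
proof -
  have "eulerian_poly m = (\<Sum>u\<in>{u. u permutes {1..m}}. monom 1 (des m u))"
    using assms by (simp add: eulerian_poly_def)
  also have "\<dots> = (\<Sum>u\<in>{u. u permutes {1..m}}. monom 1 (desl (map u [1..<Suc m])))"
    by (simp only: des_desl)
  also have "\<dots> = Pd m" unfolding Pd_def by (rule sum.reindex_bij_betw[OF perm_list_bij])
  finally show ?thesis .
qed


lemma ode_unique:
  fixes F G :: "real fps"
  assumes h0: "fps_nth F 0 = fps_nth G 0"
    and dF: "fps_deriv F = fps_const k * (fps_const c * F^2 + fps_const (1 - c) * F)"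
    and dG: "fps_deriv G = fps_const k * (fps_const c * G^2 + fps_const (1 - c) * G)"
  shows "F = G"
proof -
  have "\<forall>m\<le>n. fps_nth F m = fps_nth G m" for n
  proof (induction n)
    case 0 then show ?case using h0 by simp
  next
    case (Suc n)
    have sq: "fps_nth (F^2) n = fps_nth (G^2) n"
      unfolding power2_eq_square fps_mult_nth using Suc.IH by (intro sum.cong) auto
    have "fps_nth (fps_deriv F) n = fps_nth (fps_deriv G) n"
      unfolding dF dG using sq Suc.IH by simp
    then have "fps_nth F (Suc n) = fps_nth G (Suc n)" by (simp del: of_nat_Suc)
    then show ?case using Suc.IH le_Suc_eq by auto
  qed
  then show ?thesis by (auto simp: fps_eq_iff)
qed

lemma closed_form_ode:
  fixes c :: real and m :: nat
  assumes c: "c \<noteq> 1" and m: "m > 0"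
  defines "U \<equiv> fps_exp (of_nat m * (c - 1))"
  defines "G \<equiv> fps_const (c - 1) * inverse (fps_const c - U)"
  shows "fps_deriv G = fps_const (of_nat m) * (fps_const c * G^2 + fps_const (1 - c) * G)"
    and "fps_nth G 0 = 1"
proof -
  let ?V = "inverse (fps_const c - U)"
  have U0: "fps_nth (fps_const c - U) 0 \<noteq> 0" using c by (simp add: U_def)
  have inv: "(fps_const c - U) * ?V = 1" by (rule inverse_mult_eq_1'[OF U0])
  have dU: "fps_deriv U = fps_const (of_nat m * (c - 1)) * U" by (simp add: U_def)
  have dV: "fps_deriv ?V = fps_const (of_nat m * (c - 1)) * U * ?V^2"
    using fps_inverse_deriv[OF U0] dU by simp
  define C where "C = (fps_const c :: real fps)"
  define M where "M = (fps_const (of_nat m) :: real fps)"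
  have c1: "fps_const (c - 1) = C - 1" "fps_const (1 - c) = 1 - C" "fps_const (of_nat m * (c - 1)) = M * (C - 1)"
    by (simp_all add: C_def M_def fps_const_sub[symmetric] fps_const_mult[symmetric])
  have inv': "(C - U) * ?V = 1" using inv by (simp add: C_def)
  have "fps_deriv G = (C - 1) * (M * (C - 1) * U * ?V^2)"
    unfolding G_def using dV c1 by (simp add: C_def)
  also have "\<dots> = M * (C * ((C - 1) * ?V)^2 + (1 - C) * ((C - 1) * ?V))"
    using inv' by algebra
  also have "\<dots> = fps_const (of_nat m) * (fps_const c * G^2 + fps_const (1 - c) * G)"
    unfolding G_def c1 by (simp add: C_def M_def)
  finally show "fps_deriv G = fps_const (of_nat m) * (fps_const c * G^2 + fps_const (1 - c) * G)" .
  show "fps_nth G 0 = 1" using c by (simp add: G_def U_def)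
qed


definition scl :: "real fps \<Rightarrow> real fps" where
  "scl f = Abs_fps (\<lambda>n. 2 ^ n * fps_nth f n)"

lemma scl_mult: "scl (f * g) = scl f * scl g"
proof (rule fps_ext)
  fix n
  have "fps_nth (scl (f * g)) n = (\<Sum>i=0..n. 2 ^ n * (fps_nth f i * fps_nth g (n - i)))"
    by (simp add: scl_def fps_mult_nth sum_distrib_left)
  also have "\<dots> = (\<Sum>i=0..n. (2 ^ i * fps_nth f i) * (2 ^ (n - i) * fps_nth g (n - i)))"
    by (rule sum.cong[OF refl]) (simp add: power_add[symmetric])
  finally show "fps_nth (scl (f * g)) n = fps_nth (scl f * scl g) n"
    by (simp add: scl_def fps_mult_nth)
qed

lemma scl_add: "scl (f + g) = scl f + scl g"
  by (rule fps_ext) (simp add: scl_def algebra_simps)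

lemma scl_const: "scl (fps_const a) = fps_const a"
  by (rule fps_ext) (simp add: scl_def)

lemma scl_exp: "scl (fps_exp a) = fps_exp (2 * a)"
  by (rule fps_ext) (simp add: scl_def power_mult_distrib)

lemma scl_deriv: "fps_deriv (scl f) = fps_const 2 * scl (fps_deriv f)"
  by (rule fps_ext) (simp add: scl_def)

lemma scl_pow2: "scl (f^2) = (scl f)^2"
  by (simp add: power2_eq_square scl_mult)

lemma lowz_pow:
  fixes A :: "real fps"
  assumes A0: "fps_nth A 0 = 0"
  shows "j < m \<Longrightarrow> fps_nth (X * A ^ m) j = 0"
proof (induction m arbitrary: j X)
  case 0 then show ?case by simp
next
  case (Suc m)
  have "X * A ^ Suc m = (X * A) * A ^ m" by (simp add: algebra_simps)
  also have "fps_nth \<dots> j = (\<Sum>i=0..j. fps_nth (X * A) i * fps_nth (A ^ m) (j - i))"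
    by (simp add: fps_mult_nth)
  also have "\<dots> = 0"
  proof (rule sum.neutral, rule ballI)
    fix i assume i: "i \<in> {0..j}"
    show "fps_nth (X * A) i * fps_nth (A ^ m) (j - i) = 0"
    proof (cases "i = 0")
      case True then show ?thesis using A0 by (simp add: fps_mult_nth)
    next
      case False
      then have "j - i < m" using Suc.prems i by auto
      then have "fps_nth (1 * A ^ m) (j - i) = 0" by (rule Suc.IH)
      then show ?thesis by simp
    qed
  qed
  finally show ?case .
qed

definition cc :: "real \<Rightarrow> nat \<Rightarrow> real" where
  "cc c k = c ^ (Suc k div 2)"

lemma telescope:
  fixes A :: "real fps"
  shows "(1 - fps_const c * A^2) * (\<Sum>k\<le>N. fps_const (cc c k) * A ^ k)
       = 1 + fps_const c * A - fps_const (cc c (Suc N)) * A ^ Suc N - fps_const (cc c (Suc (Suc N))) * A ^ Suc (Suc N)"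
proof (induction N)
  case 0
  then show ?case by (simp add: cc_def algebra_simps power2_eq_square)
next
  case (Suc N)
  have cc3: "cc c (Suc (Suc (Suc N))) = c * cc c (Suc N)"
    by (simp add: cc_def)
  have "(1 - fps_const c * A^2) * (\<Sum>k\<le>Suc N. fps_const (cc c k) * A ^ k)
      = (1 - fps_const c * A^2) * (\<Sum>k\<le>N. fps_const (cc c k) * A ^ k)
        + (1 - fps_const c * A^2) * (fps_const (cc c (Suc N)) * A ^ Suc N)"
    by (simp add: algebra_simps)
  also have "\<dots> = 1 + fps_const c * A - fps_const (cc c (Suc (Suc N))) * A ^ Suc (Suc N)
                   - fps_const (cc c (Suc (Suc (Suc N)))) * A ^ Suc (Suc (Suc N))"
    unfolding Suc.IH cc3 by (simp add: algebra_simps power2_eq_square flip: fps_const_mult)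
  finally show ?case .
qed

lemma main_fps:
  fixes c :: real and FA DD :: "real fps"
  assumes c: "c \<noteq> 1"
    and FA0: "fps_nth FA 0 = 1"
    and ode: "fps_deriv FA = fps_const 1 * (fps_const c * FA^2 + fps_const (1 - c) * FA)"
    and FD: "FA = fps_exp 1 * DD"
  defines "A \<equiv> FA - 1"
  shows "fps_exp c * scl DD * (1 - fps_const c * A^2) = DD * (1 + fps_const c * A)"
proof -
  define U where "U = fps_exp (c - 1)"
  let ?V = "inverse (fps_const c - U)"
  let ?W = "inverse (fps_const c - U * U)"
  have G1: "fps_deriv (fps_const (c - 1) * ?V) = fps_const 1 * (fps_const c * (fps_const (c - 1) * ?V)^2 + fps_const (1 - c) * (fps_const (c - 1) * ?V))"
    "fps_nth (fps_const (c - 1) * ?V) 0 = 1"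
    using closed_form_ode[OF c, of 1] by (simp_all add: U_def)
  have FAc: "FA = fps_const (c - 1) * ?V"
    using ode_unique[OF _ ode G1(1)] G1(2) FA0 by simp
  have F2ode: "fps_deriv (scl FA) = fps_const 2 * (fps_const c * (scl FA)^2 + fps_const (1 - c) * scl FA)"
    unfolding scl_deriv ode by (simp add: scl_add scl_mult scl_const scl_pow2)
  have UU: "U * U = fps_exp (of_nat 2 * (c - 1))"
    unfolding U_def fps_exp_add_mult[symmetric] by simp
  have G2: "fps_deriv (fps_const (c - 1) * ?W) = fps_const 2 * (fps_const c * (fps_const (c - 1) * ?W)^2 + fps_const (1 - c) * (fps_const (c - 1) * ?W))"
    "fps_nth (fps_const (c - 1) * ?W) 0 = 1"
    using closed_form_ode[OF c, of 2] by (simp_all add: UU)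
  have F2c: "scl FA = fps_const (c - 1) * ?W"
    using ode_unique[OF _ F2ode G2(1)] G2(2) FA0 by (simp add: scl_def)
  have E: "fps_exp (-1) * fps_exp 1 = (1 :: real fps)"
    unfolding fps_exp_add_mult[symmetric] by simp
  have DDe: "DD = fps_exp (-1) * FA" using FD E by (simp add: mult.assoc[symmetric])
  have D2e: "scl DD = fps_exp (-2) * scl FA" unfolding DDe scl_mult scl_exp by simp
  have E2: "fps_exp c * fps_exp (-2) = fps_exp (-1) * U"
    unfolding U_def fps_exp_add_mult[symmetric] by simp
  have V0: "fps_nth (fps_const c - U) 0 \<noteq> 0" using c by (simp add: U_def)
  have W0: "fps_nth (fps_const c - U * U) 0 \<noteq> 0" using c by (simp add: U_def fps_mult_nth)
  have iV: "(fps_const c - U) * ?V = 1" by (rule inverse_mult_eq_1'[OF V0])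
  have iW: "(fps_const c - U * U) * ?W = 1" by (rule inverse_mult_eq_1'[OF W0])
  define C where "C = (fps_const c :: real fps)"
  have c1: "fps_const (c - 1) = C - 1" by (simp add: C_def fps_const_sub[symmetric])
  have iV': "(C - U) * ?V = 1" and iW': "(C - U * U) * ?W = 1" using iV iW by (simp_all add: C_def)
  have key: "U * ((C - 1) * ?W) * (1 - C * ((C - 1) * ?V - 1)^2) = (C - 1) * ?V * (1 + C * ((C - 1) * ?V - 1))"
    using iV' iW' by algebra
  have "fps_exp c * scl DD * (1 - fps_const c * A^2)
      = (fps_exp c * fps_exp (-2)) * (scl FA * (1 - fps_const c * A^2))"
    by (simp add: D2e mult.assoc)
  also have "\<dots> = fps_exp (-1) * (U * (scl FA) * (1 - C * A^2))"
    unfolding E2 by (simp add: mult.assoc C_def)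
  also have "\<dots> = fps_exp (-1) * (U * ((C - 1) * ?W) * (1 - C * ((C - 1) * ?V - 1)^2))"
    unfolding F2c unfolding A_def FAc c1 ..
  also have "\<dots> = fps_exp (-1) * ((C - 1) * ?V * (1 + C * ((C - 1) * ?V - 1)))" by (simp only: key)
  also have "\<dots> = DD * (1 + fps_const c * A)"
    unfolding DDe A_def FAc c1 C_def[symmetric] by (simp add: algebra_simps)
  finally show ?thesis .
qed


lemma trunc_coeff:
  fixes c :: real and FA DD :: "real fps"
  assumes c: "c \<noteq> 1"
    and FA0: "fps_nth FA 0 = 1"
    and ode: "fps_deriv FA = fps_const 1 * (fps_const c * FA^2 + fps_const (1 - c) * FA)"
    and FD: "FA = fps_exp 1 * DD"
    and nN: "n \<le> N"
  shows "fps_nth (fps_exp c * scl DD) n = fps_nth (DD * (\<Sum>k\<le>N. fps_const (cc c k) * (FA - 1) ^ k)) n"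
proof -
  define A where "A = FA - 1"
  define S where "S = (\<Sum>k\<le>N. fps_const (cc c k) * A ^ k)"
  define Q where "Q = 1 - fps_const c * A^2"
  define LB where "LB = fps_exp c * scl DD"
  define R where "R = fps_const (cc c (Suc N)) * A ^ Suc N + fps_const (cc c (Suc (Suc N))) * A ^ Suc (Suc N)"
  have A0: "fps_nth A 0 = 0" using FA0 by (simp add: A_def)
  have tel: "Q * S = 1 + fps_const c * A - R"
    unfolding Q_def S_def R_def telescope by (simp add: algebra_simps)
  have m: "LB * Q = DD * (1 + fps_const c * A)"
    unfolding LB_def Q_def A_def using main_fps[OF c FA0 ode FD] by simp
  have "Q * (LB - DD * S) = DD * R"
  proof -
    have "Q * (LB - DD * S) = LB * Q - DD * (Q * S)" by (simp add: algebra_simps)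
    also have "\<dots> = DD * R" unfolding m tel by (simp add: algebra_simps)
    finally show ?thesis .
  qed
  moreover have Q0: "fps_nth Q 0 \<noteq> 0" using A0 by (simp add: Q_def power2_eq_square fps_mult_nth)
  ultimately have "LB - DD * S = inverse Q * DD * R"
    by (metis (no_types, lifting) inverse_mult_eq_1[OF Q0] mult.assoc mult_1)
  also have "\<dots> = (inverse Q * DD * fps_const (cc c (Suc N))) * A ^ Suc N
                 + (inverse Q * DD * fps_const (cc c (Suc (Suc N)))) * A ^ Suc (Suc N)"
    by (simp add: R_def algebra_simps)
  finally have "fps_nth (LB - DD * S) n = 0"
    using lowz_pow[OF A0, of n "Suc N"] lowz_pow[OF A0, of n "Suc (Suc N)"] nN by simp
  then show ?thesis by (simp add: LB_def S_def A_def)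
qed


definition comps :: "nat \<Rightarrow> nat \<Rightarrow> nat list set" where
  "comps L m = {rs. length rs = L \<and> sum_list rs = m}"

lemma finite_comps: "finite (comps L m)"
proof -
  have "comps L m \<subseteq> {xs. set xs \<subseteq> {..m} \<and> length xs = L}"
    by (auto simp: comps_def dest: member_le_sum_list)
  moreover have "finite {xs. set xs \<subseteq> {..m::nat} \<and> length xs = L}"
    by (rule finite_lists_length_eq) simp
  ultimately show ?thesis by (rule finite_subset)
qed

lemma comps_Suc:
  "(\<Sum>rs\<in>comps (Suc k) m. f rs) = (\<Sum>i\<le>m. \<Sum>rs\<in>comps k (m - i). f (i # rs))"
proof -
  let ?g = "\<lambda>(i, rs). i # rs"
  have img: "comps (Suc k) m = ?g ` (SIGMA i:{..m}. comps k (m - i))"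
  proof (rule set_eqI, rule iffI)
    fix rs assume "rs \<in> comps (Suc k) m"
    then obtain i xs where rs: "rs = i # xs" "length xs = k" "i + sum_list xs = m"
      by (cases rs) (auto simp: comps_def)
    then show "rs \<in> ?g ` (SIGMA i:{..m}. comps k (m - i))"
      by (auto simp: comps_def image_iff intro!: bexI[of _ "(i, xs)"])
  next
    fix rs assume "rs \<in> ?g ` (SIGMA i:{..m}. comps k (m - i))"
    then show "rs \<in> comps (Suc k) m" by (auto simp: comps_def)
  qed
  have inj: "inj_on ?g (SIGMA i:{..m}. comps k (m - i))" by (auto simp: inj_on_def)
  have "(\<Sum>rs\<in>comps (Suc k) m. f rs) = (\<Sum>x\<in>(SIGMA i:{..m}. comps k (m - i)). f (?g x))"
    unfolding img by (subst sum.reindex[OF inj]) (simp only: comp_def)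
  also have "\<dots> = (\<Sum>i\<le>m. \<Sum>rs\<in>comps k (m - i). f (i # rs))"
    by (subst sum.Sigma) (auto simp: finite_comps intro!: sum.cong)
  finally show ?thesis .
qed

lemma comps_zero: "comps 0 m = (if m = 0 then {[]} else {})"
  by (auto simp: comps_def)

lemma fps_power_comps:
  fixes P :: "'a::comm_ring_1 fps"
  shows "fps_nth (P ^ k) m = (\<Sum>rs\<in>comps k m. prod_list (map (fps_nth P) rs))"
proof (induction k arbitrary: m)
  case 0
  then show ?case by (simp add: comps_zero)
next
  case (Suc k)
  have "fps_nth (P ^ Suc k) m = (\<Sum>i=0..m. fps_nth P i * fps_nth (P ^ k) (m - i))"
    by (simp add: fps_mult_nth)
  also have "\<dots> = (\<Sum>i\<le>m. \<Sum>rs\<in>comps k (m - i). prod_list (map (fps_nth P) (i # rs)))"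
    by (simp add: Suc.IH sum_distrib_left atLeast0AtMost)
  also have "\<dots> = (\<Sum>rs\<in>comps (Suc k) m. prod_list (map (fps_nth P) rs))"
    by (rule comps_Suc[symmetric])
  finally show ?case .
qed

lemma fps_mult_power_comps:
  fixes P D :: "'a::comm_ring_1 fps"
  shows "fps_nth (D * P ^ k) m = (\<Sum>rs\<in>comps (Suc k) m. fps_nth D (hd rs) * prod_list (map (fps_nth P) (tl rs)))"
proof -
  have "fps_nth (D * P ^ k) m = (\<Sum>i=0..m. fps_nth D i * fps_nth (P ^ k) (m - i))"
    by (simp add: fps_mult_nth)
  also have "\<dots> = (\<Sum>i\<le>m. \<Sum>rs\<in>comps k (m - i). fps_nth D (hd (i # rs)) * prod_list (map (fps_nth P) (tl (i # rs))))"
    by (simp add: fps_power_comps sum_distrib_left atLeast0AtMost)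
  also have "\<dots> = (\<Sum>rs\<in>comps (Suc k) m. fps_nth D (hd rs) * prod_list (map (fps_nth P) (tl rs)))"
    by (rule comps_Suc[symmetric])
  finally show ?thesis .
qed

lemma prod_fact_dvd: "prod_list (map fact rs) dvd (fact (sum_list rs) :: nat)"
proof (induction rs)
  case Nil then show ?case by simp
next
  case (Cons r rs)
  have "fact r * fact (sum_list rs) * ((r + sum_list rs) choose r) = (fact (r + sum_list rs) :: nat)"
    using binomial_fact_lemma[of r "r + sum_list rs"] by simp
  then have "fact r * fact (sum_list rs) dvd (fact (r + sum_list rs) :: nat)"
    by (metis dvd_triv_left)
  moreover have "fact r * prod_list (map fact rs) dvd fact r * (fact (sum_list rs) :: nat)"
    using Cons.IH by simp
  ultimately show ?case by (auto intro: dvd_trans)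
qed

lemma multinomial_real:
  assumes "sum_list rs = n"
  shows "real (multinomial n rs) = fact n / prod_list (map fact rs)"
proof -
  have d: "prod_list (map fact rs) dvd (fact n :: nat)" using prod_fact_dvd[of rs] assms by simp
  have pos: "prod_list (map fact rs) \<noteq> (0::nat)" by (induction rs) auto
  have "real (multinomial n rs) = real (fact n div prod_list (map fact rs))" by (simp add: multinomial_def)
  also have "\<dots> = real (fact n) / real (prod_list (map fact rs))"
    using d pos by (simp add: real_of_nat_div)
  also have "\<dots> = fact n / prod_list (map fact rs)"
  proof -
    have "real (prod_list (map fact rs)) = prod_list (map fact rs)" by (induction rs) auto
    then show ?thesis by simp
  qed
  finally show ?thesis .
qed


definition av :: "int \<Rightarrow> nat \<Rightarrow> real" where "av t n = real_of_int (poly (Pd n) t)"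
definition dv :: "int \<Rightarrow> nat \<Rightarrow> real" where "dv t n = real_of_int (poly (derangement_poly n) t)"
definition FAt :: "int \<Rightarrow> real fps" where "FAt t = Abs_fps (\<lambda>n. av t n / fact n)"
definition DDt :: "int \<Rightarrow> real fps" where "DDt t = Abs_fps (\<lambda>n. dv t n / fact n)"

lemma Pd_0: "Pd 0 = 1" by (simp add: Pd_def)

lemma av_0: "av t 0 = 1" by (simp add: av_def Pd_0)

lemma K1: "fps_nth (FAt t) 0 = 1" by (simp add: FAt_def av_0)

lemma av_der: "av t n = (\<Sum>k\<le>n. of_nat (n choose k) * dv t (n - k))"
  by (simp add: av_def dv_def Pd_Pe Pe_der poly_sum)

lemma K2: "FAt t = fps_exp 1 * DDt t"
proof (rule fps_ext)
  fix n
  have "fps_nth (FAt t) n = (\<Sum>k\<le>n. of_nat (n choose k) * dv t (n - k)) / fact n"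
    by (simp add: FAt_def av_der)
  also have "\<dots> = (\<Sum>k\<le>n. (1 / fact k) * (dv t (n - k) / fact (n - k)))"
    by (simp add: sum_divide_distrib binomial_fact field_simps)
  also have "\<dots> = fps_nth (fps_exp 1 * DDt t) n"
    by (simp add: fps_mult_nth DDt_def atLeast0AtMost)
  finally show "fps_nth (FAt t) n = fps_nth (fps_exp 1 * DDt t) n" .
qed

lemma av_Suc: "av t (Suc n) = real_of_int t * (\<Sum>k\<le>n. of_nat (n choose k) * (av t k * av t (n - k))) + (1 - real_of_int t) * av t n"
proof -
  have "av t (Suc n) = (\<Sum>k\<le>n. of_nat (n choose k) * (av t k * (if k = n then 1 else real_of_int t * av t (n - k))))"
    by (simp add: av_def Pd_split poly_sum poly_monom if_distrib[of "\<lambda>p. poly p t"] if_distrib[of real_of_int] cong: if_cong)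
  also have "\<dots> = (\<Sum>k\<le>n. real_of_int t * (of_nat (n choose k) * (av t k * av t (n - k)))
                     + (if k = n then (1 - real_of_int t) * av t n else 0))"
    by (rule sum.cong[OF refl]) (auto simp: av_0 algebra_simps)
  also have "\<dots> = real_of_int t * (\<Sum>k\<le>n. of_nat (n choose k) * (av t k * av t (n - k))) + (1 - real_of_int t) * av t n"
    by (simp add: sum.distrib sum_distrib_left)
  finally show ?thesis .
qed

lemma K3: "fps_deriv (FAt t) = fps_const 1 * (fps_const (real_of_int t) * (FAt t)^2 + fps_const (1 - real_of_int t) * FAt t)"
proof (rule fps_ext)
  fix n
  let ?c = "real_of_int t"
  have "fps_nth (fps_deriv (FAt t)) n = av t (Suc n) / fact n"
    by (simp add: FAt_def field_simps del: of_nat_Suc)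
  also have "\<dots> = ?c * (\<Sum>k\<le>n. (av t k / fact k) * (av t (n - k) / fact (n - k))) + (1 - ?c) * (av t n / fact n)"
    unfolding av_Suc by (simp add: add_divide_distrib sum_divide_distrib binomial_fact field_simps sum_distrib_left)
  also have "\<dots> = fps_nth (fps_const 1 * (fps_const ?c * (FAt t)^2 + fps_const (1 - ?c) * FAt t)) n"
  proof -
    have sq: "fps_nth ((FAt t)^2) n = (\<Sum>k\<le>n. (av t k / fact k) * (av t (n - k) / fact (n - k)))"
      by (simp add: power2_eq_square fps_mult_nth atLeast0AtMost FAt_def)
    show ?thesis by (simp add: sq) (simp add: FAt_def)
  qed
  finally show "fps_nth (fps_deriv (FAt t)) n = fps_nth (fps_const 1 * (fps_const ?c * (FAt t)^2 + fps_const (1 - ?c) * FAt t)) n" .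
qed

lemma K4: "real_of_int (poly (derangement_polyB n) t) / fact n = fps_nth (fps_exp (real_of_int t) * scl (DDt t)) n"
proof -
  let ?c = "real_of_int t"
  have "real_of_int (poly (derangement_polyB n) t) = (\<Sum>k\<le>n. of_nat (n choose k) * 2 ^ (n - k) * (?c ^ k * dv t (n - k)))"
    by (simp add: dB_formula poly_sum dv_def poly_monom)
  then have "real_of_int (poly (derangement_polyB n) t) / fact n = (\<Sum>k\<le>n. (?c ^ k / fact k) * (2 ^ (n - k) * (dv t (n - k) / fact (n - k))))"
    by (simp add: sum_divide_distrib binomial_fact field_simps)
  also have "\<dots> = fps_nth (fps_exp ?c * scl (DDt t)) n"
    by (simp add: fps_mult_nth scl_def DDt_def atLeast0AtMost)
  finally show ?thesis .
qed


definition TT :: "nat \<Rightarrow> nat list \<Rightarrow> int poly" where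
  "TT n rs = (if rs \<noteq> [] \<and> sum_list rs = n
           then smult (of_nat (multinomial n rs))
                  (monom 1 (length rs div 2) * derangement_poly (hd rs)
                     * prod_list (map eulerian_poly (tl rs)))
           else 0)"

lemma length_le_sum_list: "(\<forall>x\<in>set xs. (1::nat) \<le> x) \<Longrightarrow> length xs \<le> sum_list xs"
  by (induction xs) auto

lemma eulerian_0: "eulerian_poly 0 = 0" by (simp add: eulerian_poly_def)

lemma TT_support: "{rs. TT n rs \<noteq> 0} \<subseteq> (\<Union>k\<le>n. comps (Suc k) n)"
proof
  fix rs assume "rs \<in> {rs. TT n rs \<noteq> 0}"
  then have h: "rs \<noteq> []" "sum_list rs = n" "prod_list (map eulerian_poly (tl rs)) \<noteq> 0"
    by (auto simp: TT_def split: if_splits)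
  have "\<forall>x\<in>set (tl rs). 1 \<le> x"
  proof
    fix x assume "x \<in> set (tl rs)"
    then have "eulerian_poly x \<noteq> 0" using h(3) by (auto simp: prod_list_zero_iff)
    then show "1 \<le> x" using eulerian_0 by (cases x) auto
  qed
  then have "length (tl rs) \<le> sum_list (tl rs)" by (rule length_le_sum_list)
  moreover have "sum_list (tl rs) \<le> n" using h(1,2) by (cases rs) auto
  ultimately show "rs \<in> (\<Union>k\<le>n. comps (Suc k) n)"
    using h(1,2) by (cases rs) (auto simp: comps_def)
qed

lemma L1: "Sum_any (TT n) = (\<Sum>k\<le>n. \<Sum>rs\<in>comps (Suc k) n. TT n rs)"
proof -
  have "Sum_any (TT n) = sum (TT n) (\<Union>k\<le>n. comps (Suc k) n)"
    by (rule Sum_any.expand_superset) (auto simp: finite_comps TT_support[simplified])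
  also have "\<dots> = (\<Sum>k\<le>n. \<Sum>rs\<in>comps (Suc k) n. TT n rs)"
    by (rule sum.UNION_disjoint) (simp_all add: finite_comps, auto simp: comps_def)
  finally show ?thesis .
qed

definition ev :: "int \<Rightarrow> nat \<Rightarrow> real" where "ev t r = real_of_int (poly (eulerian_poly r) t)"

lemma ev_prod: "real_of_int (poly (prod_list (map eulerian_poly xs)) t) = prod_list (map (ev t) xs)"
  by (induction xs) (auto simp: ev_def)

lemma FA1_nth: "fps_nth (FAt t - 1) r = ev t r / fact r"
proof (cases "r = 0")
  case True then show ?thesis by (simp add: FAt_def av_0 ev_def eulerian_0)
next
  case False then show ?thesis by (simp add: FAt_def av_def ev_def eulerian_Pd)
qed

lemma FA1_fun: "fps_nth (FAt t - 1) = (\<lambda>r. ev t r / fact r)"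
  by (rule ext) (rule FA1_nth)

lemma prod_div: "prod_list (map (\<lambda>r. ev t r / fact r) xs) = prod_list (map (ev t) xs) / prod_list (map fact xs)"
  by (induction xs) auto

lemma prod_fact_nz: "prod_list (map fact xs) \<noteq> (0::real)"
  by (induction xs) auto

lemma L2:
  assumes rs: "rs \<in> comps (Suc k) n"
  shows "real_of_int (poly (TT n rs) t) = cc (real_of_int t) k * fact n *
           (fps_nth (DDt t) (hd rs) * prod_list (map (fps_nth (FAt t - 1)) (tl rs)))"
proof -
  obtain h xs where r: "rs = h # xs" "length xs = k" "sum_list rs = n" using rs by (cases rs) (auto simp: comps_def)
  have m: "real (multinomial n rs) = fact n / (fact h * prod_list (map fact xs))"
    using multinomial_real[OF r(3)] r(1) by simp
  have "real_of_int (poly (TT n rs) t) = real (multinomial n rs) * (real_of_int t ^ (Suc k div 2) * dv t h * prod_list (map (ev t) xs))"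
    using r by (simp add: TT_def poly_monom dv_def ev_prod[symmetric])
  also have "\<dots> = cc (real_of_int t) k * fact n * (dv t h / fact h * (prod_list (map (ev t) xs) / prod_list (map fact xs)))"
    unfolding m cc_def using prod_fact_nz[of xs] by (simp add: field_simps)
  also have "\<dots> = cc (real_of_int t) k * fact n *
           (fps_nth (DDt t) (hd rs) * prod_list (map (fps_nth (FAt t - 1)) (tl rs)))"
    using r by (simp add: DDt_def FA1_fun prod_div)
  finally show ?thesis .
qed

lemma L3:
  assumes t: "t \<noteq> 1"
  shows "real_of_int (poly (Sum_any (TT n)) t) = real_of_int (poly (derangement_polyB n) t)"
proof -
  let ?c = "real_of_int t"
  have c: "?c \<noteq> 1" using t by simp
  have "real_of_int (poly (Sum_any (TT n)) t) = (\<Sum>k\<le>n. \<Sum>rs\<in>comps (Suc k) n. real_of_int (poly (TT n rs) t))"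
    by (simp add: L1 poly_sum)
  also have "\<dots> = (\<Sum>k\<le>n. cc ?c k * fact n * fps_nth (DDt t * (FAt t - 1) ^ k) n)"
    by (rule sum.cong[OF refl]) (simp add: L2 fps_mult_power_comps sum_distrib_left)
  also have "\<dots> = fact n * fps_nth (DDt t * (\<Sum>k\<le>n. fps_const (cc ?c k) * (FAt t - 1) ^ k)) n"
  proof -
    have e: "fps_nth (DDt t * (fps_const a * Y)) n = a * fps_nth (DDt t * Y) n" for a Y
      by (simp add: mult.left_commute[of "DDt t"])
    show ?thesis by (simp only: sum_distrib_left fps_sum_nth e) (simp add: mult_ac)
  qed
  also have "\<dots> = fact n * fps_nth (fps_exp ?c * scl (DDt t)) n"
    using trunc_coeff[OF c K1 K3 K2, of n n] by simp
  also have "\<dots> = real_of_int (poly (derangement_polyB n) t)"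
    using K4[of n t] by (simp add: field_simps)
  finally show ?thesis .
qed

lemma main_eq: "derangement_polyB n = Sum_any (TT n)"
proof -
  let ?p = "derangement_polyB n - Sum_any (TT n)"
  have roots: "{x. x \<noteq> (1::int)} \<subseteq> {x. poly ?p x = 0}"
    using L3 by auto
  have "infinite {x. x \<noteq> (1::int)}"
  proof
    assume "finite {x. x \<noteq> (1::int)}"
    then have "finite (insert 1 {x. x \<noteq> (1::int)})" by simp
    moreover have "insert 1 {x. x \<noteq> (1::int)} = UNIV" by auto
    ultimately show False using infinite_UNIV_int by simp
  qed
  then have "infinite {x. poly ?p x = 0}" using roots finite_subset by blast
  then have "?p = 0" using poly_roots_finite by blast
  then show ?thesis by simp
qed

theorem theorem1p1:
  fixes n :: nat
  shows "derangement_polyB n =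
    (\<Sum>rs. if rs \<noteq> [] \<and> sum_list rs = n
           then smult (of_nat (multinomial n rs))
                  (monom 1 (length rs div 2) * derangement_poly (hd rs)
                     * prod_list (map eulerian_poly (tl rs)))
           else 0)"
  using main_eq[of n] unfolding TT_def[abs_def] .


end
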